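(* Let $G$ be a finite connected graph of minimal degree at least $2$, $W:V(G)\to\mathbb R$, and suppose $G$ has a cycle $(u_0,u_1,\dots,u_m,u_0)$ which does not contain all vertices of $G$. Then for every $\lambda$ in the bulk spectrum, $$\left|\zeta^\lambda_{u_0}(u_1)\zeta^\lambda_{u_1}(u_2)\cdots\zeta^\lambda_{u_{m-1}}(u_m)\zeta^\lambda_{u_m}(u_0)\right|\le 1-\frac{z_\lambda(G)^2}{4}.$$
   Context: $H_G=\mathcal A_G+W$. $(\widetilde G,\widetilde W)$ is the universal cover tree of $G$ with lifted potential and $H_{\widetilde G}=\mathcal A_{\widetilde G}+\widetilde W$. For adjacent $v\sim w$ in the tree, $\zeta^\gamma_w(v)=-(H^{(v|w)}-\gamma)^{-1}(v,v)$ for $\Im\gamma>0$, with $H^{(v|w)}$ the restriction to the component containing $v$ of the tree minus the edge $\{v,w\}$; for an oriented edge $(x,y)$ of $G$, $\zeta^\gamma_y(x):=\zeta^\gamma_{\tilde y}(\tilde x)$ for adjacent lifts, and $\zeta^\lambda_y(x)=\lim_{\eta\downarrow0}\zeta^{\lambda+i\eta}_y(x)$. The spectrum $\sigma(H_{\widetilde G})$ is the disjoint union of finitely many open intervals $J_r$ of absolutely continuous spectrum, a finite set of eigenvalues and the endpoints of the $J_r$; the bulk spectrum is $\bigcup_rJ_r$, where all $\zeta^\lambda_y(x)$ exist with nonzero imaginary part. $z_\lambda(G)=\min_{(x,y)}|\Im\zeta^\lambda_y(x)|$ over oriented edges of $G$. *)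

theory Defs
  imports "HOL-Analysis.Analysis"
begin

definition fin_graph :: "'a set \<Rightarrow> ('a \<Rightarrow> 'a \<Rightarrow> bool) \<Rightarrow> bool" where
  "fin_graph V E \<longleftrightarrow> finite V \<and> V \<noteq> {} \<and>
     (\<forall>x y. E x y \<longrightarrow> x \<in> V \<and> y \<in> V) \<and>
     (\<forall>x y. E x y \<longrightarrow> E y x) \<and> (\<forall>x. \<not> E x x)"

definition graph_connected :: "'a set \<Rightarrow> ('a \<Rightarrow> 'a \<Rightarrow> bool) \<Rightarrow> bool" where
  "graph_connected V E \<longleftrightarrow> (\<forall>x\<in>V. \<forall>y\<in>V. E\<^sup>*\<^sup>* x y)"

definition min_degree_ge :: "'a set \<Rightarrow> ('a \<Rightarrow> 'a \<Rightarrow> bool) \<Rightarrow> nat \<Rightarrow> bool" where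
  "min_degree_ge V E k \<longleftrightarrow> (\<forall>x\<in>V. card {y. E x y} \<ge> k)"

definition is_cycle :: "('a \<Rightarrow> 'a \<Rightarrow> bool) \<Rightarrow> (nat \<Rightarrow> 'a) \<Rightarrow> nat \<Rightarrow> bool" where
  "is_cycle E u m \<longleftrightarrow> m \<ge> 2 \<and> inj_on u {0..m} \<and>
     (\<forall>i<m. E (u i) (u (Suc i))) \<and> E (u m) (u 0)"

text \<open>Vertices of the universal cover tree rooted at r: non-backtracking walks starting at r.\<close>
definition nb_walks :: "('a \<Rightarrow> 'a \<Rightarrow> bool) \<Rightarrow> 'a \<Rightarrow> 'a list set" where
  "nb_walks E r = {p. p \<noteq> [] \<and> hd p = r \<and>
      (\<forall>i. Suc i < length p \<longrightarrow> E (p ! i) (p ! Suc i)) \<and>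
      (\<forall>i. Suc (Suc i) < length p \<longrightarrow> p ! Suc (Suc i) \<noteq> p ! i)}"

definition tree_adj :: "('a \<Rightarrow> 'a \<Rightarrow> bool) \<Rightarrow> 'a \<Rightarrow> 'a list \<Rightarrow> 'a list \<Rightarrow> bool" where
  "tree_adj E r p q \<longleftrightarrow> p \<in> nb_walks E r \<and> q \<in> nb_walks E r \<and>
      ((\<exists>w. q = p @ [w]) \<or> (\<exists>w. p = q @ [w]))"

definition tree_branch :: "('a \<Rightarrow> 'a \<Rightarrow> bool) \<Rightarrow> 'a \<Rightarrow> 'a list \<Rightarrow> 'a list \<Rightarrow> 'a list set" where
  "tree_branch E r v w =
     {u. (\<lambda>a b. tree_adj E r a b \<and> {a, b} \<noteq> {v, w})\<^sup>*\<^sup>* v u}"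

text \<open>Diagonal resolvent entry (H^S - gamma)^{-1}(v,v) of the restriction to S of
  H = adjacency + lifted potential on the tree: the value at v of the unique
  l^2(S) function g with (H^S - gamma) g = delta_v.\<close>
definition tree_green :: "('a \<Rightarrow> 'a \<Rightarrow> bool) \<Rightarrow> ('a \<Rightarrow> real) \<Rightarrow> 'a \<Rightarrow> 'a list set
    \<Rightarrow> complex \<Rightarrow> 'a list \<Rightarrow> complex" where
  "tree_green E W r S \<gamma> v =
     (THE g. (\<forall>x. x \<notin> S \<longrightarrow> g x = 0) \<and>
             (\<lambda>x. (cmod (g x))\<^sup>2) summable_on S \<and>
             (\<forall>x\<in>S. (\<Sum>y\<in>{y\<in>S. tree_adj E r x y}. g y)
                      + (complex_of_real (W (last x)) - \<gamma>) * g x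
                    = (if x = v then 1 else 0))) v"

text \<open>zeta^gamma_y(x) for an oriented edge (x,y) of G, computed on the adjacent
  lifts [y,x] and [y] in the universal cover tree rooted at y.\<close>
definition zeta :: "('a \<Rightarrow> 'a \<Rightarrow> bool) \<Rightarrow> ('a \<Rightarrow> real) \<Rightarrow> complex \<Rightarrow> 'a \<Rightarrow> 'a \<Rightarrow> complex" where
  "zeta E W \<gamma> x y = - tree_green E W y (tree_branch E y [y, x] [y]) \<gamma> [y, x]"

definition zeta_bv :: "('a \<Rightarrow> 'a \<Rightarrow> bool) \<Rightarrow> ('a \<Rightarrow> real) \<Rightarrow> real \<Rightarrow> 'a \<Rightarrow> 'a \<Rightarrow> complex" where
  "zeta_bv E W lam x y = Lim (at_right 0) (\<lambda>\<eta>::real. zeta E W (complex_of_real lam + \<i> * complex_of_real \<eta>) x y)"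

definition bulk_spectrum :: "('a \<Rightarrow> 'a \<Rightarrow> bool) \<Rightarrow> ('a \<Rightarrow> real) \<Rightarrow> real set" where
  "bulk_spectrum E W = {lam. \<forall>x y. E x y \<longrightarrow>
      (\<exists>L. ((\<lambda>\<eta>::real. zeta E W (complex_of_real lam + \<i> * complex_of_real \<eta>) x y) \<longlongrightarrow> L) (at_right 0)
           \<and> Im L \<noteq> 0)}"

definition z_lambda :: "('a \<Rightarrow> 'a \<Rightarrow> bool) \<Rightarrow> ('a \<Rightarrow> real) \<Rightarrow> real \<Rightarrow> real" where
  "z_lambda E W lam = Min {\<bar>Im (zeta_bv E W lam x y)\<bar> | x y. E x y}"

end

theory Submission
  imports Defs
begin



locale gr =
  fixes V :: "'a set" and E :: "'a \<Rightarrow> 'a \<Rightarrow> bool"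
  assumes fg: "fin_graph V E"
begin

lemma finV: "finite V" using fg by (simp add: fin_graph_def)
lemma EV: "E x y \<Longrightarrow> x \<in> V \<and> y \<in> V" using fg by (simp add: fin_graph_def)
lemma Esym: "E x y \<Longrightarrow> E y x" using fg by (simp add: fin_graph_def)
lemma Eirr: "\<not> E x x" using fg by (simp add: fin_graph_def)

definition ch :: "'a \<Rightarrow> 'a \<Rightarrow> 'a set" where "ch x y = {z. E x z \<and> z \<noteq> y}"

lemma ch_sub: "ch x y \<subseteq> V" using EV by (auto simp: ch_def)
lemma fin_ch: "finite (ch x y)" using ch_sub finV finite_subset by blast
lemma card_ch: "card (ch x y) \<le> card V" using ch_sub finV card_mono by blast

lemma nbw_snoc:
  assumes "p \<in> nb_walks E r"
  shows "p @ [w] \<in> nb_walks E r \<longleftrightarrow> E (last p) w \<and> (2 \<le> length p \<longrightarrow> w \<noteq> p ! (length p - 2))"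
proof -
  have ne: "p \<noteq> []" and hd: "hd p = r"
    and e: "\<And>i. Suc i < length p \<Longrightarrow> E (p ! i) (p ! Suc i)"
    and nb: "\<And>i. Suc (Suc i) < length p \<Longrightarrow> p ! Suc (Suc i) \<noteq> p ! i"
    using assms by (auto simp: nb_walks_def)
  have lastp: "last p = p ! (length p - 1)" using ne by (simp add: last_conv_nth)
  show ?thesis
  proof
    assume a: "p @ [w] \<in> nb_walks E r"
    have H: "\<forall>i. Suc i < length (p@[w]) \<longrightarrow> E ((p@[w]) ! i) ((p@[w]) ! Suc i)"
      using a unfolding nb_walks_def by blast
    have X: "Suc (length p - 1) < length (p@[w])" using ne by simp
    have "E ((p@[w]) ! (length p - 1)) ((p@[w]) ! Suc (length p - 1))"
      using H[rule_format, OF X] .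
    moreover have "Suc (length p - 1) = length p" using ne by simp
    ultimately have "E (p ! (length p - 1)) w" using ne by (simp add: nth_append)
    hence 1: "E (last p) w" using lastp by simp
    have 2: "w \<noteq> p ! (length p - 2)" if "2 \<le> length p"
    proof -
      have "(p@[w]) ! Suc (Suc (length p - 2)) \<noteq> (p@[w]) ! (length p - 2)"
        using a that unfolding nb_walks_def by auto
      moreover have "Suc (Suc (length p - 2)) = length p" using that by simp
      ultimately show ?thesis using that by (simp add: nth_append)
    qed
    show "E (last p) w \<and> (2 \<le> length p \<longrightarrow> w \<noteq> p ! (length p - 2))" using 1 2 by blast
  next
    assume a: "E (last p) w \<and> (2 \<le> length p \<longrightarrow> w \<noteq> p ! (length p - 2))"
    show "p @ [w] \<in> nb_walks E r"
      unfolding nb_walks_def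
    proof (intro CollectI conjI allI impI)
      show "p @ [w] \<noteq> []" by simp
      show "hd (p @ [w]) = r" using ne hd by simp
    next
      fix i assume i: "Suc i < length (p @ [w])"
      show "E ((p @ [w]) ! i) ((p @ [w]) ! Suc i)"
      proof (cases "Suc i < length p")
        case True then show ?thesis using e by (simp add: nth_append)
      next
        case False
        then have "i = length p - 1" "Suc i = length p" using i by auto
        then show ?thesis using a lastp by (simp add: nth_append)
      qed
    next
      fix i assume i: "Suc (Suc i) < length (p @ [w])"
      show "(p @ [w]) ! Suc (Suc i) \<noteq> (p @ [w]) ! i"
      proof (cases "Suc (Suc i) < length p")
        case True then show ?thesis using nb by (simp add: nth_append)
      next
        case False
        then have "i = length p - 2" "Suc (Suc i) = length p" using i by auto
        then show ?thesis using a by (simp add: nth_append)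
      qed
    qed
  qed
qed

lemma nbw_butlast:
  assumes "p \<in> nb_walks E r" "2 \<le> length p"
  shows "butlast p \<in> nb_walks E r"
proof -
  have bl: "butlast p \<noteq> []" using assms(2) by (cases p) auto
  have "hd p = hd (butlast p)" using bl by (metis append_butlast_last_id hd_append2 list.size(3) not_numeral_le_zero assms(2))
  then show ?thesis using assms bl unfolding nb_walks_def
    by (auto simp: nth_butlast)
qed

lemma nbw_pair: "E y x \<Longrightarrow> [y, x] \<in> nb_walks E y"
  unfolding nb_walks_def by (auto simp: less_Suc_eq nth_Cons split: nat.splits)

lemma nbw_set:
  assumes "p \<in> nb_walks E r" "2 \<le> length p"
  shows "set p \<subseteq> V"
proof
  fix a assume "a \<in> set p"
  then obtain i where i: "i < length p" "a = p ! i" by (auto simp: in_set_conv_nth)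
  show "a \<in> V"
  proof (cases "Suc i < length p")
    case True
    then have "E (p!i) (p ! Suc i)" using assms by (auto simp: nb_walks_def)
    then show ?thesis using EV i by auto
  next
    case False
    then have "i \<ge> 1" "Suc (i - 1) < length p" "Suc (i-1) = i" using assms i by auto
    then have "E (p!(i-1)) (p ! i)" using assms by (metis (no_types, lifting) mem_Collect_eq nb_walks_def)
    then show ?thesis using EV i by auto
  qed
qed

end



context gr begin

definition Sb :: "'a \<Rightarrow> 'a \<Rightarrow> 'a list set" where
  "Sb y x = {p \<in> nb_walks E y. 2 \<le> length p \<and> p ! 1 = x}"
definition cw :: "'a list \<Rightarrow> 'a set" where
  "cw p = ch (last p) (p ! (length p - 2))"
definition sh :: "'a \<Rightarrow> 'a \<Rightarrow> nat \<Rightarrow> 'a list set" where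
  "sh y x k = {p \<in> Sb y x. length p = k}"

lemma fin_cw: "finite (cw p)" by (simp add: cw_def fin_ch)

lemma Sb_snoc:
  assumes "p \<in> Sb y x"
  shows "p @ [w] \<in> Sb y x \<longleftrightarrow> w \<in> cw p"
proof -
  have p: "p \<in> nb_walks E y" "2 \<le> length p" "p ! 1 = x" using assms by (auto simp: Sb_def)
  have "(p @ [w]) ! 1 = p ! 1" using p(2) by (simp add: nth_append)
  then show ?thesis using nbw_snoc[OF p(1)] p by (auto simp: Sb_def cw_def ch_def)
qed

lemma Sb_len: "p \<in> Sb y x \<Longrightarrow> 2 \<le> length p" by (simp add: Sb_def)

lemma Sb_butlast:
  assumes "p \<in> Sb y x" "3 \<le> length p"
  shows "butlast p \<in> Sb y x" "p = butlast p @ [last p]" "last p \<in> cw (butlast p)"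
proof -
  have p: "p \<in> nb_walks E y" "2 \<le> length p" "p ! 1 = x" using assms by (auto simp: Sb_def)
  show 1: "butlast p \<in> Sb y x" using nbw_butlast[OF p(1,2)] p assms(2)
    by (auto simp: Sb_def nth_butlast)
  show 2: "p = butlast p @ [last p]" using p(2) by (cases p) auto
  show "last p \<in> cw (butlast p)" using Sb_snoc[OF 1, of "last p"] 2 assms(1) by simp
qed

lemma Sb_pair: "E y x \<Longrightarrow> [y, x] \<in> Sb y x"
  using nbw_pair by (simp add: Sb_def)

lemma Sb_two: assumes "p \<in> Sb y x" "length p = 2" shows "p = [y, x]"
proof -
  have p: "p \<in> nb_walks E y" "p ! 1 = x" using assms by (auto simp: Sb_def)
  have "hd p = y" using p by (simp add: nb_walks_def)
  moreover obtain a b where "p = [a, b]" using assms(2)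
    by (metis (no_types, lifting) One_nat_def Suc_1 length_0_conv length_Suc_conv)
  ultimately show ?thesis using p by simp
qed

lemma branch_eq:
  assumes "E y x"
  shows "tree_branch E y [y, x] [y] = Sb y x"
proof
  show "tree_branch E y [y, x] [y] \<subseteq> Sb y x"
  proof
    fix q assume "q \<in> tree_branch E y [y, x] [y]"
    then have "(\<lambda>a b. tree_adj E y a b \<and> {a, b} \<noteq> {[y, x], [y]})\<^sup>*\<^sup>* [y, x] q"
      by (simp add: tree_branch_def)
    then show "q \<in> Sb y x"
    proof (induction rule: rtranclp_induct)
      case base then show ?case using Sb_pair[OF assms] .
    next
      case (step a b)
      have a: "a \<in> nb_walks E y" "2 \<le> length a" "a ! 1 = x" using step.IH by (auto simp: Sb_def)
      have b: "b \<in> nb_walks E y" using step.hyps by (simp add: tree_adj_def)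
      consider (ext) w where "b = a @ [w]" | (red) w where "a = b @ [w]"
        using step.hyps by (auto simp: tree_adj_def)
      then show ?case
      proof cases
        case ext
        then show ?thesis using a b by (auto simp: Sb_def nth_append)
      next
        case red
        show ?thesis
        proof (cases "length a = 2")
          case True
          then have "a = [y, x]" using Sb_two step.IH by blast
          then have "b = [y]" using red by (cases b) auto
          then show ?thesis using step.hyps \<open>a = [y,x]\<close> by auto
        next
          case False
          then have "2 \<le> length b" using red a by simp
          then show ?thesis using a b red by (auto simp: Sb_def nth_append)
        qed
      qed
    qed
  qed
next
  show "Sb y x \<subseteq> tree_branch E y [y, x] [y]"
  proof
    fix p assume p: "p \<in> Sb y x"
    show "p \<in> tree_branch E y [y, x] [y]"
      using p
    proof (induction "length p" arbitrary: p rule: less_induct)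
      case less
      show ?case
      proof (cases "length p = 2")
        case True
        then show ?thesis using Sb_two[OF less.prems] by (simp add: tree_branch_def)
      next
        case False
        then have l3: "3 \<le> length p" using Sb_len[OF less.prems] by simp
        note bl = Sb_butlast[OF less.prems l3]
        have IH: "butlast p \<in> tree_branch E y [y, x] [y]"
          using less.hyps[OF _ bl(1)] l3 by simp
        have adj: "tree_adj E y (butlast p) p"
          using bl less.prems unfolding tree_adj_def Sb_def by blast
        have "{butlast p, p} \<noteq> {[y, x], [y]}"
        proof
          assume "{butlast p, p} = {[y, x], [y]}"
          then have "p \<in> {[y,x],[y]}" by blast
          then show False using l3 by auto
        qed
        then show ?thesis using IH adj unfolding tree_branch_def
          by (simp add: rtranclp.rtrancl_into_rtrancl)
      qed
    qed
  qed
qed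

lemma nbrs:
  assumes "p \<in> Sb y x"
  shows "{q \<in> Sb y x. tree_adj E y p q} =
         (\<lambda>w. p @ [w]) ` cw p \<union> (if 3 \<le> length p then {butlast p} else {})"
proof (intro set_eqI iffI)
  fix q assume q: "q \<in> {q \<in> Sb y x. tree_adj E y p q}"
  then have qS: "q \<in> Sb y x" by simp
  consider (ext) w where "q = p @ [w]" | (red) w where "p = q @ [w]"
    using q by (auto simp: tree_adj_def)
  then show "q \<in> (\<lambda>w. p @ [w]) ` cw p \<union> (if 3 \<le> length p then {butlast p} else {})"
  proof cases
    case ext then show ?thesis using Sb_snoc[OF assms] qS by auto
  next
    case red
    then have "3 \<le> length p" using Sb_len[OF qS] by simp
    then show ?thesis using red by simp
  qed
next
  fix q assume q: "q \<in> (\<lambda>w. p @ [w]) ` cw p \<union> (if 3 \<le> length p then {butlast p} else {})"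
  have pn: "p \<in> nb_walks E y" using assms by (simp add: Sb_def)
  show "q \<in> {q \<in> Sb y x. tree_adj E y p q}"
  proof (cases "q \<in> (\<lambda>w. p @ [w]) ` cw p")
    case True
    then obtain w where w: "w \<in> cw p" "q = p @ [w]" by auto
    then have "q \<in> Sb y x" using Sb_snoc[OF assms] by simp
    then show ?thesis using w pn by (auto simp: tree_adj_def Sb_def)
  next
    case False
    then have l3: "3 \<le> length p" and qb: "q = butlast p" using q by (auto split: if_splits)
    note bl = Sb_butlast[OF assms l3]
    show ?thesis using bl qb pn unfolding tree_adj_def Sb_def by auto
  qed
qed

lemma sh_sub: "sh y x k \<subseteq> {p. set p \<subseteq> V \<and> length p = k}"
  using nbw_set by (auto simp: sh_def Sb_def)

lemma fin_sh: "finite (sh y x k)"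
  using finite_subset[OF sh_sub finite_lists_length_eq[OF finV]] .

lemma sh_Suc:
  assumes "2 \<le> k"
  shows "sh y x (Suc k) = (\<lambda>(p, w). p @ [w]) ` (SIGMA p:sh y x k. cw p)"
proof (intro set_eqI iffI)
  fix q assume q: "q \<in> sh y x (Suc k)"
  then have qS: "q \<in> Sb y x" and l: "length q = Suc k" by (auto simp: sh_def)
  then have l3: "3 \<le> length q" using assms by simp
  note bl = Sb_butlast[OF qS l3]
  have "(butlast q, last q) \<in> (SIGMA p:sh y x k. cw p)" using bl l by (auto simp: sh_def)
  then show "q \<in> (\<lambda>(p, w). p @ [w]) ` (SIGMA p:sh y x k. cw p)"
    using bl(2) by (metis (no_types, lifting) case_prod_conv image_eqI)
next
  fix q assume "q \<in> (\<lambda>(p, w). p @ [w]) ` (SIGMA p:sh y x k. cw p)"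
  then obtain p w where "p \<in> sh y x k" "w \<in> cw p" "q = p @ [w]" by auto
  then show "q \<in> sh y x (Suc k)" using Sb_snoc by (auto simp: sh_def)
qed

lemma sum_sh_Suc:
  assumes "2 \<le> k"
  shows "(\<Sum>q\<in>sh y x (Suc k). f q) = (\<Sum>p\<in>sh y x k. \<Sum>w\<in>cw p. f (p @ [w]))"
proof -
  have inj: "inj_on (\<lambda>(p, w). p @ [w]) (SIGMA p:sh y x k. cw p)"
    by (auto simp: inj_on_def)
  have "(\<Sum>q\<in>sh y x (Suc k). f q) = (\<Sum>pw\<in>(SIGMA p:sh y x k. cw p). f ((\<lambda>(p, w). p @ [w]) pw))"
    unfolding sh_Suc[OF assms] by (rule sum.reindex[OF inj, unfolded comp_def])
  also have "\<dots> = (\<Sum>(p,w)\<in>(SIGMA p:sh y x k. cw p). f (p @ [w]))"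
    by (rule sum.cong) auto
  also have "\<dots> = (\<Sum>p\<in>sh y x k. \<Sum>w\<in>cw p. f (p @ [w]))"
    by (rule sum.Sigma[symmetric]) (auto simp: fin_sh fin_cw)
  finally show ?thesis .
qed

definition Sn :: "'a \<Rightarrow> 'a \<Rightarrow> nat \<Rightarrow> 'a list set" where
  "Sn y x n = {p \<in> Sb y x. length p \<le> n}"

lemma Sn_Un: "Sn y x n = (\<Union>k\<in>{2..n}. sh y x k)"
  using Sb_len by (auto simp: Sn_def sh_def)

lemma fin_Sn: "finite (Sn y x n)" unfolding Sn_Un using fin_sh by auto

lemma sum_Sn: "(\<Sum>p\<in>Sn y x n. f p) = (\<Sum>k=2..n. \<Sum>p\<in>sh y x k. f p)"
  unfolding Sn_Un
  by (rule sum.UNION_disjoint) (auto simp: fin_sh[unfolded sh_def] sh_def)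

lemma fin_sub_Sn:
  assumes "finite F" "F \<subseteq> Sb y x"
  shows "\<exists>n. F \<subseteq> Sn y x n"
proof -
  have "\<forall>p\<in>F. length p \<le> Max (length ` F)" using assms by auto
  then show ?thesis using assms by (intro exI[of _ "Max (length ` F)"]) (auto simp: Sn_def)
qed

end



lemma Im_inv_cmod: "(d::complex) \<noteq> 0 \<Longrightarrow> - Im (1 / d) = (cmod (1 / d))\<^sup>2 * Im d"
  by (simp add: Im_divide norm_divide power_divide cmod_power2 divide_simps)

lemma cmod_ge_Im: "\<bar>Im z\<bar> \<le> cmod z" by (rule abs_Im_le_cmod)

context gr begin

definition den :: "('a \<Rightarrow> real) \<Rightarrow> complex \<Rightarrow> ('a \<Rightarrow> 'a \<Rightarrow> complex) \<Rightarrow> 'a \<Rightarrow> 'a \<Rightarrow> complex" where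
  "den W \<gamma> \<zeta> x y = \<gamma> - complex_of_real (W x) - (\<Sum>z\<in>ch x y. \<zeta> z x)"

definition Fm :: "('a \<Rightarrow> real) \<Rightarrow> complex \<Rightarrow> ('a \<Rightarrow> 'a \<Rightarrow> complex) \<Rightarrow> 'a \<Rightarrow> 'a \<Rightarrow> complex" where
  "Fm W \<gamma> \<zeta> x y = 1 / den W \<gamma> \<zeta> x y"

definition Ka :: "('a \<Rightarrow> 'a \<Rightarrow> complex) \<Rightarrow> bool" where
  "Ka \<zeta> \<longleftrightarrow> (\<forall>x y. E x y \<longrightarrow> Im (\<zeta> x y) \<le> 0)"

lemma chE: "z \<in> ch x y \<Longrightarrow> E x z" by (simp add: ch_def)

lemma den_Im:
  assumes "Ka \<zeta>"
  shows "Im (den W \<gamma> \<zeta> x y) = Im \<gamma> + (\<Sum>z\<in>ch x y. - Im (\<zeta> z x))"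
    and "(\<Sum>z\<in>ch x y. - Im (\<zeta> z x)) \<ge> 0"
proof -
  show "Im (den W \<gamma> \<zeta> x y) = Im \<gamma> + (\<Sum>z\<in>ch x y. - Im (\<zeta> z x))"
    by (simp add: den_def Im_sum sum_negf)
  show "(\<Sum>z\<in>ch x y. - Im (\<zeta> z x)) \<ge> 0"
    using assms chE Esym by (intro sum_nonneg) (auto simp: Ka_def)
qed

lemma Fm_props:
  assumes "Ka \<zeta>" "Im \<gamma> > 0"
  shows "den W \<gamma> \<zeta> x y \<noteq> 0" "Im (den W \<gamma> \<zeta> x y) \<ge> Im \<gamma>"
    "cmod (Fm W \<gamma> \<zeta> x y) \<le> 1 / Im \<gamma>"
    "- Im (Fm W \<gamma> \<zeta> x y) = (cmod (Fm W \<gamma> \<zeta> x y))\<^sup>2 * Im (den W \<gamma> \<zeta> x y)"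
    "- Im (Fm W \<gamma> \<zeta> x y) > 0"
proof -
  note d = den_Im(1)[OF assms(1), where W=W and \<gamma>=\<gamma> and x=x and y=y] den_Im(2)[OF assms(1), where x=x and y=y]
  show ge: "Im (den W \<gamma> \<zeta> x y) \<ge> Im \<gamma>" using d by simp
  then have pos: "Im (den W \<gamma> \<zeta> x y) > 0" using assms by simp
  then show nz: "den W \<gamma> \<zeta> x y \<noteq> 0" by auto
  have "cmod (den W \<gamma> \<zeta> x y) \<ge> Im \<gamma>" using ge cmod_ge_Im[of "den W \<gamma> \<zeta> x y"] by linarith
  then show "cmod (Fm W \<gamma> \<zeta> x y) \<le> 1 / Im \<gamma>" using assms(2)
    by (simp add: Fm_def norm_divide frac_le)
  show eq: "- Im (Fm W \<gamma> \<zeta> x y) = (cmod (Fm W \<gamma> \<zeta> x y))\<^sup>2 * Im (den W \<gamma> \<zeta> x y)"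
    unfolding Fm_def using Im_inv_cmod[OF nz] .
  have "Fm W \<gamma> \<zeta> x y \<noteq> 0" using nz by (simp add: Fm_def)
  then show "- Im (Fm W \<gamma> \<zeta> x y) > 0" using eq pos by simp
qed

lemma Fm_Ka: "Ka \<zeta> \<Longrightarrow> Im \<gamma> > 0 \<Longrightarrow> Ka (Fm W \<gamma> \<zeta>)"
  using Fm_props(5) unfolding Ka_def by (metis less_eq_real_def neg_0_less_iff_less)


lemma kappa_bound:
  fixes A \<eta> N :: real
  assumes "\<eta> > 0" "N \<ge> 0" "A \<ge> 0" "A \<le> N / \<eta>"
  shows "A \<le> (N / (\<eta>\<^sup>2 + N)) * (\<eta> + A)"
proof -
  have "A * \<eta> \<le> N" using assms by (simp add: field_simps)
  then have "A * (\<eta>\<^sup>2 + N) \<le> N * (\<eta> + A)" using assms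
    by (simp add: power2_eq_square algebra_simps mult_left_mono)
  moreover have pos: "\<eta>\<^sup>2 + N > 0" using assms by (simp add: add_pos_nonneg)
  ultimately have "A \<le> N * (\<eta> + A) / (\<eta>\<^sup>2 + N)" by (simp add: pos_le_divide_eq[OF pos])
  then show ?thesis by simp
qed

lemma sumA_bound:
  assumes "Ka \<zeta>" "\<eta> > 0" "\<forall>x y. E x y \<longrightarrow> cmod (\<zeta> x y) \<le> 1 / \<eta>"
  shows "(\<Sum>c\<in>ch x y. - Im (\<zeta> c x)) \<le> real (card V) / \<eta>"
proof -
  have "(\<Sum>c\<in>ch x y. - Im (\<zeta> c x)) \<le> (\<Sum>c\<in>ch x y. 1 / \<eta>)"
  proof (rule sum_mono)
    fix c assume "c \<in> ch x y"
    then have "E c x" using chE Esym by blast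
    then show "- Im (\<zeta> c x) \<le> 1 / \<eta>" using assms(3) abs_Im_le_cmod[of "\<zeta> c x"] by force
  qed
  also have "\<dots> = real (card (ch x y)) / \<eta>" by simp
  also have "\<dots> \<le> real (card V) / \<eta>" using card_ch assms(2) by (simp add: divide_right_mono)
  finally show ?thesis .
qed

lemma contr:
  fixes \<zeta> \<xi> :: "'a \<Rightarrow> 'a \<Rightarrow> complex"
  assumes K: "Ka \<zeta>" "Ka \<xi>" and eta: "Im \<gamma> > 0"
    and bz: "\<forall>x y. E x y \<longrightarrow> cmod (\<zeta> x y) \<le> 1 / Im \<gamma>"
    and bx: "\<forall>x y. E x y \<longrightarrow> cmod (\<xi> x y) \<le> 1 / Im \<gamma>"
    and Q: "\<forall>x y. E x y \<longrightarrow> (cmod (\<zeta> x y - \<xi> x y))\<^sup>2 \<le> Q * (- Im (\<zeta> x y)) * (- Im (\<xi> x y))"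
    and Q0: "Q \<ge> 0"
  shows "(cmod (Fm W \<gamma> \<zeta> x y - Fm W \<gamma> \<xi> x y))\<^sup>2
      \<le> (real (card V) / ((Im \<gamma>)\<^sup>2 + real (card V)))\<^sup>2 * Q * (- Im (Fm W \<gamma> \<zeta> x y)) * (- Im (Fm W \<gamma> \<xi> x y))"
proof -
  define \<eta> where "\<eta> = Im \<gamma>"
  define N where "N = real (card V)"
  define \<kappa> where "\<kappa> = N / (\<eta>\<^sup>2 + N)"
  define dz where "dz = den W \<gamma> \<zeta> x y"
  define dx where "dx = den W \<gamma> \<xi> x y"
  define A where "A = (\<Sum>c\<in>ch x y. - Im (\<zeta> c x))"
  define B where "B = (\<Sum>c\<in>ch x y. - Im (\<xi> c x))"
  define S where "S = (\<Sum>c\<in>ch x y. \<zeta> c x - \<xi> c x)"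
  have eta0: "\<eta> > 0" using eta by (simp add: \<eta>_def)
  have A0: "A \<ge> 0" and B0: "B \<ge> 0" using den_Im(2)[OF K(1)] den_Im(2)[OF K(2)] by (auto simp: A_def B_def)
  have ImA: "Im dz = \<eta> + A" and ImB: "Im dx = \<eta> + B"
    using den_Im(1)[OF K(1)] den_Im(1)[OF K(2)] by (auto simp: A_def B_def dz_def dx_def \<eta>_def)
  have nzz: "dz \<noteq> 0" and nzx: "dx \<noteq> 0" using Fm_props(1)[OF K(1) eta] Fm_props(1)[OF K(2) eta]
    by (auto simp: dz_def dx_def)
  have Fz: "Fm W \<gamma> \<zeta> x y = 1 / dz" and Fx: "Fm W \<gamma> \<xi> x y = 1 / dx" by (auto simp: Fm_def dz_def dx_def)
  have imz: "- Im (Fm W \<gamma> \<zeta> x y) = (cmod (1/dz))\<^sup>2 * (\<eta> + A)"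
    using Im_inv_cmod[OF nzz] by (simp add: Fz ImA)
  have imx: "- Im (Fm W \<gamma> \<xi> x y) = (cmod (1/dx))\<^sup>2 * (\<eta> + B)"
    using Im_inv_cmod[OF nzx] by (simp add: Fx ImB)
  have diffS: "dx - dz = S"
    by (simp add: dx_def dz_def den_def S_def sum_subtractf)
  have Fdiff: "1/dz - 1/dx = S * (1/dz) * (1/dx)"
    using nzz nzx diffS by (simp add: field_simps)
  have "cmod S \<le> (\<Sum>c\<in>ch x y. cmod (\<zeta> c x - \<xi> c x))" unfolding S_def by (rule norm_sum)
  also have "\<dots> \<le> (\<Sum>c\<in>ch x y. sqrt Q * (sqrt (- Im (\<zeta> c x)) * sqrt (- Im (\<xi> c x))))"
  proof (rule sum_mono)
    fix c assume "c \<in> ch x y"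
    then have "E c x" using chE Esym by blast
    then have "(cmod (\<zeta> c x - \<xi> c x))\<^sup>2 \<le> Q * (- Im (\<zeta> c x)) * (- Im (\<xi> c x))" using Q by blast
    then have "sqrt ((cmod (\<zeta> c x - \<xi> c x))\<^sup>2) \<le> sqrt (Q * (- Im (\<zeta> c x)) * (- Im (\<xi> c x)))"
      by (rule real_sqrt_le_mono)
    then have "cmod (\<zeta> c x - \<xi> c x) \<le> sqrt (Q * (- Im (\<zeta> c x)) * (- Im (\<xi> c x)))"
      by (simp only: real_sqrt_abs abs_norm_cancel)
    also have "sqrt (Q * (- Im (\<zeta> c x)) * (- Im (\<xi> c x))) = sqrt Q * (sqrt (- Im (\<zeta> c x)) * sqrt (- Im (\<xi> c x)))"
      by (simp only: real_sqrt_mult mult.assoc)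
    finally show "cmod (\<zeta> c x - \<xi> c x) \<le> sqrt Q * (sqrt (- Im (\<zeta> c x)) * sqrt (- Im (\<xi> c x)))" .
  qed
  also have "\<dots> = sqrt Q * (\<Sum>c\<in>ch x y. sqrt (- Im (\<zeta> c x)) * sqrt (- Im (\<xi> c x)))"
    by (simp add: sum_distrib_left)
  finally have cS: "cmod S \<le> sqrt Q * (\<Sum>c\<in>ch x y. sqrt (- Im (\<zeta> c x)) * sqrt (- Im (\<xi> c x)))" .
  have nn: "\<And>c. c \<in> ch x y \<Longrightarrow> - Im (\<zeta> c x) \<ge> 0 \<and> - Im (\<xi> c x) \<ge> 0"
    using K chE Esym unfolding Ka_def by (meson neg_0_le_iff_le)
  have CS: "(\<Sum>c\<in>ch x y. sqrt (- Im (\<zeta> c x)) * sqrt (- Im (\<xi> c x)))\<^sup>2 \<le> A * B"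
  proof -
    have "(\<Sum>c\<in>ch x y. sqrt (- Im (\<zeta> c x)) * sqrt (- Im (\<xi> c x)))\<^sup>2
        \<le> (\<Sum>c\<in>ch x y. (sqrt (- Im (\<zeta> c x)))\<^sup>2) * (\<Sum>c\<in>ch x y. (sqrt (- Im (\<xi> c x)))\<^sup>2)"
      by (rule Cauchy_Schwarz_ineq_sum)
    also have "\<dots> = A * B" unfolding A_def B_def
      by (intro arg_cong2[where f="(*)"] sum.cong refl) (use nn in simp_all)
    finally show ?thesis .
  qed
  have S2: "(cmod S)\<^sup>2 \<le> Q * (A * B)"
  proof -
    have "(cmod S)\<^sup>2 \<le> (sqrt Q * (\<Sum>c\<in>ch x y. sqrt (- Im (\<zeta> c x)) * sqrt (- Im (\<xi> c x))))\<^sup>2"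
      using cS by (simp add: power_mono)
    also have "\<dots> = Q * (\<Sum>c\<in>ch x y. sqrt (- Im (\<zeta> c x)) * sqrt (- Im (\<xi> c x)))\<^sup>2"
      using Q0 by (simp add: power_mult_distrib)
    also have "\<dots> \<le> Q * (A * B)" using CS Q0 by (simp add: mult_left_mono)
    finally show ?thesis .
  qed
  have bzK: "\<forall>x y. E x y \<longrightarrow> cmod (\<zeta> x y) \<le> 1 / \<eta>" using bz by (simp add: \<eta>_def)
  have bxK: "\<forall>x y. E x y \<longrightarrow> cmod (\<xi> x y) \<le> 1 / \<eta>" using bx by (simp add: \<eta>_def)
  have Ak: "A \<le> \<kappa> * (\<eta> + A)" unfolding \<kappa>_def N_def
    using kappa_bound[OF eta0 _ A0 sumA_bound[OF K(1) eta0 bzK, of x y, folded A_def]] by simp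
  have Bk: "B \<le> \<kappa> * (\<eta> + B)" unfolding \<kappa>_def N_def
    using kappa_bound[OF eta0 _ B0 sumA_bound[OF K(2) eta0 bxK, of x y, folded B_def]] by simp
  have AB: "A * B \<le> (\<kappa> * (\<eta> + A)) * (\<kappa> * (\<eta> + B))"
    using Ak Bk A0 B0 by (simp add: mult_mono)
  have S3: "(cmod S)\<^sup>2 \<le> \<kappa>\<^sup>2 * Q * (\<eta> + A) * (\<eta> + B)"
  proof -
    have "Q * (A * B) \<le> Q * ((\<kappa> * (\<eta> + A)) * (\<kappa> * (\<eta> + B)))" using AB Q0 by (simp add: mult_left_mono)
    then show ?thesis using S2 by (simp add: power2_eq_square algebra_simps)
  qed
  have "(cmod (Fm W \<gamma> \<zeta> x y - Fm W \<gamma> \<xi> x y))\<^sup>2 = (cmod S)\<^sup>2 * (cmod (1/dz))\<^sup>2 * (cmod (1/dx))\<^sup>2"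
    unfolding Fz Fx Fdiff by (simp add: norm_mult norm_divide power_mult_distrib power_divide)
  also have "\<dots> \<le> (\<kappa>\<^sup>2 * Q * (\<eta> + A) * (\<eta> + B)) * (cmod (1/dz))\<^sup>2 * (cmod (1/dx))\<^sup>2"
    using S3 by (simp add: mult_right_mono)
  also have "\<dots> = \<kappa>\<^sup>2 * Q * (- Im (Fm W \<gamma> \<zeta> x y)) * (- Im (Fm W \<gamma> \<xi> x y))"
    unfolding imz imx by (simp add: algebra_simps)
  finally show ?thesis unfolding \<kappa>_def N_def \<eta>_def .
qed

end



context gr begin

lemma fixpoint_exists:
  assumes eta: "Im \<gamma> > 0"
  shows "\<exists>\<zeta>. Ka \<zeta> \<and> (\<forall>x y. E x y \<longrightarrow> \<zeta> x y = Fm W \<gamma> \<zeta> x y)"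
proof -
  define \<eta> where "\<eta> = Im \<gamma>"
  have eta0: "\<eta> > 0" using eta by (simp add: \<eta>_def)
  define N where "N = real (card V)"
  define \<kappa> where "\<kappa> = N / (\<eta>\<^sup>2 + N)"
  have N0: "N \<ge> 0" by (simp add: N_def)
  have k0: "\<kappa> \<ge> 0" and k1: "\<kappa> < 1" using eta0 N0 by (auto simp: \<kappa>_def add_pos_nonneg)
  define s where "s = (\<lambda>n. (Fm W \<gamma> ^^ Suc n) (\<lambda>_ _. 0))"
  have sSuc: "s (Suc n) = Fm W \<gamma> (s n)" for n by (simp add: s_def)
  have K0: "Ka (\<lambda>_ _. 0)" by (simp add: Ka_def)
  have sK: "Ka (s n)" for n
    by (induction n) (auto simp: s_def Fm_Ka[OF K0 eta] Fm_Ka[OF _ eta])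
  have sF: "s n = Fm W \<gamma> (case n of 0 \<Rightarrow> (\<lambda>_ _. 0) | Suc m \<Rightarrow> s m)" for n
    by (cases n) (auto simp: s_def)
  have prevK: "Ka (case n of 0 \<Rightarrow> (\<lambda>_ _. 0) | Suc m \<Rightarrow> s m)" for n
    by (cases n) (auto simp: K0 sK)
  have sb: "cmod (s n x y) \<le> 1 / \<eta>" for n x y
    using Fm_props(3)[OF prevK eta] sF unfolding \<eta>_def by metis
  have sI: "- Im (s n x y) > 0" for n x y
    using Fm_props(5)[OF prevK eta] sF by metis
  have sIb: "- Im (s n x y) \<le> 1 / \<eta>" for n x y
    using sb[of n x y] abs_Im_le_cmod[of "s n x y"] by linarith
  define r where "r = (\<lambda>x y. (cmod (s 1 x y - s 0 x y))\<^sup>2 / ((- Im (s 1 x y)) * (- Im (s 0 x y))))"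
  define D where "D = {(x, y). E x y}"
  have finD: "finite D"
    by (rule finite_subset[of _ "V \<times> V"]) (auto simp: D_def EV finV)
  define Q0 where "Q0 = (\<Sum>(x,y)\<in>D. r x y)"
  have r0: "r x y \<ge> 0" for x y
  proof -
    have "(- Im (s 1 x y)) * (- Im (s 0 x y)) > 0" using sI[of 1 x y] sI[of 0 x y] by (intro mult_pos_pos)
    then show ?thesis unfolding r_def by (intro divide_nonneg_pos) auto
  qed
  have Q00: "Q0 \<ge> 0" unfolding Q0_def using r0 by (auto intro: sum_nonneg)
  have rQ: "r x y \<le> Q0" if "E x y" for x y
  proof -
    have "(x, y) \<in> D" using that by (simp add: D_def)
    then show ?thesis unfolding Q0_def
      using member_le_sum[of "(x,y)" D "\<lambda>(x,y). r x y"] finD r0 by auto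
  qed
  have step: "\<forall>x y. E x y \<longrightarrow> (cmod (s (Suc n) x y - s n x y))\<^sup>2 \<le> \<kappa>^(2*n) * Q0 * (- Im (s (Suc n) x y)) * (- Im (s n x y))" for n
  proof (induction n)
    case 0
    show ?case
    proof (intro allI impI)
      fix x y assume "E x y"
      then have "r x y \<le> Q0" by (rule rQ)
      moreover have pos: "(- Im (s 1 x y)) * (- Im (s 0 x y)) > 0" using sI[of 1 x y] sI[of 0 x y] by (intro mult_pos_pos)
      ultimately have "(cmod (s 1 x y - s 0 x y))\<^sup>2 \<le> Q0 * ((- Im (s 1 x y)) * (- Im (s 0 x y)))"
        unfolding r_def using pos_divide_le_eq[OF pos] by blast
      then show "(cmod (s (Suc 0) x y - s 0 x y))\<^sup>2 \<le> \<kappa>^(2*0) * Q0 * (- Im (s (Suc 0) x y)) * (- Im (s 0 x y))"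
        by (simp add: algebra_simps)
    qed
  next
    case (Suc n)
    have Qn: "\<kappa>^(2*n) * Q0 \<ge> 0" using k0 Q00 by simp
    have bz: "\<forall>x y. E x y \<longrightarrow> cmod (s m x y) \<le> 1 / Im \<gamma>" for m using sb by (simp add: \<eta>_def)
    have Qh: "\<forall>x y. E x y \<longrightarrow> (cmod (s (Suc n) x y - s n x y))\<^sup>2 \<le> (\<kappa>^(2*n) * Q0) * (- Im (s (Suc n) x y)) * (- Im (s n x y))"
      using Suc.IH by simp
    show ?case
    proof (intro allI impI)
      fix x y assume "E x y"
      have "(cmod (Fm W \<gamma> (s (Suc n)) x y - Fm W \<gamma> (s n) x y))\<^sup>2
          \<le> (N / (\<eta>\<^sup>2 + N))\<^sup>2 * (\<kappa>^(2*n) * Q0) * (- Im (Fm W \<gamma> (s (Suc n)) x y)) * (- Im (Fm W \<gamma> (s n) x y))"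
        using contr[OF sK sK eta bz bz Qh Qn, of W x y] by (simp add: N_def \<eta>_def)
      then show "(cmod (s (Suc (Suc n)) x y - s (Suc n) x y))\<^sup>2 \<le> \<kappa>^(2*Suc n) * Q0 * (- Im (s (Suc (Suc n)) x y)) * (- Im (s (Suc n) x y))"
        unfolding sSuc[symmetric] \<kappa>_def[symmetric] by (simp add: power_add power2_eq_square algebra_simps)
    qed
  qed
  have dbound: "cmod (s (Suc n) x y - s n x y) \<le> \<kappa>^n * (sqrt Q0 / \<eta>)" if "E x y" for n x y
  proof -
    have ab: "(- Im (s (Suc n) x y)) * (- Im (s n x y)) \<le> (1/\<eta>) * (1/\<eta>)"
      using sI sIb eta0 by (intro mult_mono) (auto simp: less_imp_le)
    have h1: "(cmod (s (Suc n) x y - s n x y))\<^sup>2 \<le> (\<kappa>^(2*n) * Q0) * ((- Im (s (Suc n) x y)) * (- Im (s n x y)))"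
      using step[of n] that by (simp only: mult.assoc)
    have c0: "\<kappa>^(2*n) * Q0 \<ge> 0" using k0 Q00 by simp
    have h2: "(\<kappa>^(2*n) * Q0) * ((- Im (s (Suc n) x y)) * (- Im (s n x y))) \<le> (\<kappa>^(2*n) * Q0) * ((1/\<eta>) * (1/\<eta>))"
      using mult_left_mono[OF ab c0] .
    have h3: "(\<kappa>^(2*n) * Q0) * ((1/\<eta>) * (1/\<eta>)) = (\<kappa>^n * (sqrt Q0 / \<eta>))\<^sup>2"
      using Q00 by (simp add: power_even_eq power_mult_distrib power_divide power2_eq_square)
    have "(cmod (s (Suc n) x y - s n x y))\<^sup>2 \<le> (\<kappa>^n * (sqrt Q0 / \<eta>))\<^sup>2"
      using h1 h2 h3 by linarith
    moreover have "0 \<le> \<kappa>^n * (sqrt Q0 / \<eta>)" using k0 Q00 eta0 by simp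
    ultimately show ?thesis by (rule power2_le_imp_le)
  qed
  have conv: "\<exists>L. (\<lambda>n. s n x y) \<longlonglongrightarrow> L" if "E x y" for x y
  proof -
    have sm: "summable (\<lambda>n. s (Suc n) x y - s n x y)"
    proof (rule summable_norm_cancel, rule summable_comparison_test)
      show "\<exists>N. \<forall>n\<ge>N. norm (norm (s (Suc n) x y - s n x y)) \<le> \<kappa>^n * (sqrt Q0 / \<eta>)"
        using dbound[OF that] by auto
      show "summable (\<lambda>n. \<kappa>^n * (sqrt Q0 / \<eta>))"
        using k0 k1 by (intro summable_mult2 summable_geometric) simp
    qed
    have "(\<lambda>n. \<Sum>k<n. s (Suc k) x y - s k x y) \<longlonglongrightarrow> suminf (\<lambda>n. s (Suc n) x y - s n x y)"
      using summable_LIMSEQ[OF sm] .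
    moreover have "(\<Sum>k<n. s (Suc k) x y - s k x y) = s n x y - s 0 x y" for n
      by (induction n) auto
    ultimately have "(\<lambda>n. s n x y - s 0 x y) \<longlonglongrightarrow> suminf (\<lambda>n. s (Suc n) x y - s n x y)" by simp
    then have "(\<lambda>n. (s n x y - s 0 x y) + s 0 x y) \<longlonglongrightarrow> suminf (\<lambda>n. s (Suc n) x y - s n x y) + s 0 x y"
      by (intro tendsto_add tendsto_const)
    then show ?thesis by auto
  qed
  define L where "L = (\<lambda>x y. lim (\<lambda>n. s n x y))"
  have Lt: "(\<lambda>n. s n x y) \<longlonglongrightarrow> L x y" if "E x y" for x y
    using conv[OF that] unfolding L_def by (auto simp: convergent_LIMSEQ_iff[symmetric] convergent_def)
  have LK: "Ka L"
    unfolding Ka_def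
  proof (intro allI impI)
    fix x y assume e: "E x y"
    have "(\<lambda>n. Im (s n x y)) \<longlonglongrightarrow> Im (L x y)" by (intro tendsto_Im Lt e)
    moreover have "\<forall>n. Im (s n x y) \<le> 0" using sI by (simp add: less_imp_le)
    ultimately show "Im (L x y) \<le> 0" by (meson LIMSEQ_le_const2)
  qed
  have fxp: "L x y = Fm W \<gamma> L x y" if e: "E x y" for x y
  proof -
    have "(\<lambda>n. den W \<gamma> (s n) x y) \<longlonglongrightarrow> den W \<gamma> L x y"
      unfolding den_def
      by (intro tendsto_diff tendsto_const tendsto_sum Lt) (meson chE Esym)
    moreover have "den W \<gamma> L x y \<noteq> 0" using Fm_props(1)[OF LK eta] .
    ultimately have "(\<lambda>n. Fm W \<gamma> (s n) x y) \<longlonglongrightarrow> Fm W \<gamma> L x y"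
      unfolding Fm_def by (intro tendsto_divide tendsto_const)
    then have "(\<lambda>n. s (Suc n) x y) \<longlonglongrightarrow> Fm W \<gamma> L x y" by (simp add: sSuc)
    then have "(\<lambda>n. s n x y) \<longlonglongrightarrow> Fm W \<gamma> L x y" by (rule LIMSEQ_imp_Suc)
    then show ?thesis using Lt[OF e] LIMSEQ_unique by blast
  qed
  show ?thesis using LK fxp by blast
qed

end



context gr begin

definition FP :: "('a \<Rightarrow> real) \<Rightarrow> complex \<Rightarrow> ('a \<Rightarrow> 'a \<Rightarrow> complex) \<Rightarrow> bool" where
  "FP W \<gamma> \<zeta> \<longleftrightarrow> Ka \<zeta> \<and> (\<forall>x y. E x y \<longrightarrow> \<zeta> x y = Fm W \<gamma> \<zeta> x y)"

lemma FP_props: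
  assumes "FP W \<gamma> \<zeta>" "Im \<gamma> > 0" "E x y"
  shows "\<zeta> x y \<noteq> 0"
    "(\<Sum>c\<in>ch x y. \<zeta> c x) = \<gamma> - complex_of_real (W x) - 1 / \<zeta> x y"
    "- Im (\<zeta> x y) = (cmod (\<zeta> x y))\<^sup>2 * (Im \<gamma> + (\<Sum>c\<in>ch x y. - Im (\<zeta> c x)))"
    "cmod (\<zeta> x y) \<le> 1 / Im \<gamma>"
    "Im (\<zeta> x y) \<le> 0"
proof -
  have K: "Ka \<zeta>" and fx: "\<zeta> x y = Fm W \<gamma> \<zeta> x y" using assms by (auto simp: FP_def)
  have nz: "den W \<gamma> \<zeta> x y \<noteq> 0" by (rule Fm_props(1)[OF K assms(2)])
  show "\<zeta> x y \<noteq> 0" using fx nz by (simp add: Fm_def)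
  have "1 / \<zeta> x y = den W \<gamma> \<zeta> x y" using fx nz by (simp add: Fm_def)
  then show "(\<Sum>c\<in>ch x y. \<zeta> c x) = \<gamma> - complex_of_real (W x) - 1 / \<zeta> x y"
    by (simp add: den_def)
  show "- Im (\<zeta> x y) = (cmod (\<zeta> x y))\<^sup>2 * (Im \<gamma> + (\<Sum>c\<in>ch x y. - Im (\<zeta> c x)))"
    using Fm_props(4)[OF K assms(2)] den_Im(1)[OF K] fx by metis
  show "cmod (\<zeta> x y) \<le> 1 / Im \<gamma>" using Fm_props(3)[OF K assms(2)] fx by metis
  show "Im (\<zeta> x y) \<le> 0" using K assms(3) by (simp add: Ka_def)
qed

definition gsol :: "('a \<Rightarrow> 'a \<Rightarrow> complex) \<Rightarrow> 'a \<Rightarrow> 'a \<Rightarrow> 'a list \<Rightarrow> complex" where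
  "gsol \<zeta> y x p = (if p \<in> Sb y x then - (\<Prod>j\<in>{1..<length p}. \<zeta> (p ! j) (p ! (j - 1))) else 0)"

lemma g_snoc:
  assumes "p \<in> Sb y x" "w \<in> cw p"
  shows "gsol \<zeta> y x (p @ [w]) = gsol \<zeta> y x p * \<zeta> w (last p)"
proof -
  have pw: "p @ [w] \<in> Sb y x" using Sb_snoc assms by blast
  have l: "2 \<le> length p" using Sb_len assms(1) by simp
  have ne0: "p \<noteq> []" using l by auto
  have "(\<Prod>j\<in>{1..<length (p @ [w])}. \<zeta> ((p @ [w]) ! j) ((p @ [w]) ! (j - 1)))
      = (\<Prod>j\<in>{1..<length p}. \<zeta> ((p @ [w]) ! j) ((p @ [w]) ! (j - 1))) * \<zeta> ((p @ [w]) ! length p) ((p @ [w]) ! (length p - 1))"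
    using l ne0 by (simp add: prod.atLeastLessThan_Suc)
  also have "(\<Prod>j\<in>{1..<length p}. \<zeta> ((p @ [w]) ! j) ((p @ [w]) ! (j - 1))) = (\<Prod>j\<in>{1..<length p}. \<zeta> (p ! j) (p ! (j - 1)))"
    by (intro prod.cong refl) (auto simp: nth_append)
  also have "\<zeta> ((p @ [w]) ! length p) ((p @ [w]) ! (length p - 1)) = \<zeta> w (last p)"
  proof -
    have ne: "p \<noteq> []" using l by auto
    show ?thesis using l ne by (simp add: nth_append last_conv_nth)
  qed
  finally show ?thesis using pw assms(1) by (simp add: gsol_def)
qed

lemma g_two: "E y x \<Longrightarrow> gsol \<zeta> y x [y, x] = - \<zeta> x y"
  using Sb_pair by (simp add: gsol_def)

lemma last_prev_edge:
  assumes "p \<in> Sb y x" shows "E (last p) (p ! (length p - 2))"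
proof -
  have p: "p \<in> nb_walks E y" "2 \<le> length p" using assms by (auto simp: Sb_def)
  then have "E (p ! (length p - 2)) (p ! Suc (length p - 2))" by (auto simp: nb_walks_def)
  moreover have "Suc (length p - 2) = length p - 1" using p by simp
  moreover have "last p = p ! (length p - 1)" using p by (cases p) (auto simp: last_conv_nth)
  ultimately show ?thesis using Esym by simp
qed

lemma nbr_sum:
  assumes "p \<in> Sb y x"
  shows "(\<Sum>q\<in>{q \<in> Sb y x. tree_adj E y p q}. f q)
       = (\<Sum>w\<in>cw p. f (p @ [w])) + (if 3 \<le> length p then f (butlast p) else 0)"
proof -
  have inj: "inj_on (\<lambda>w. p @ [w]) (cw p)" by (auto simp: inj_on_def)
  have disj: "(\<lambda>w. p @ [w]) ` cw p \<inter> (if 3 \<le> length p then {butlast p} else {}) = {}"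
  proof -
    have nb: "butlast p \<noteq> p @ [w]" for w
    proof
      assume "butlast p = p @ [w]"
      then have "length (butlast p) = length (p @ [w])" by simp
      then show False by simp
    qed
    show ?thesis using nb by (auto split: if_splits)
  qed
  have "(\<Sum>q\<in>{q \<in> Sb y x. tree_adj E y p q}. f q)
      = (\<Sum>q\<in>(\<lambda>w. p @ [w]) ` cw p. f q) + (\<Sum>q\<in>(if 3 \<le> length p then {butlast p} else {}). f q)"
    unfolding nbrs[OF assms] by (rule sum.union_disjoint[OF _ _ disj]) (auto simp: fin_cw)
  also have "(\<Sum>q\<in>(\<lambda>w. p @ [w]) ` cw p. f q) = (\<Sum>w\<in>cw p. f (p @ [w]))"
    by (rule sum.reindex[OF inj, unfolded comp_def])
  finally show ?thesis by simp
qed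

lemma g_eq:
  assumes fp: "FP W \<gamma> \<zeta>" and eta: "Im \<gamma> > 0" and e: "E y x" and p: "p \<in> Sb y x"
  shows "(\<Sum>q\<in>{q \<in> Sb y x. tree_adj E y p q}. gsol \<zeta> y x q)
           + (complex_of_real (W (last p)) - \<gamma>) * gsol \<zeta> y x p = (if p = [y, x] then 1 else 0)"
proof -
  define l where "l = last p"
  define pr where "pr = p ! (length p - 2)"
  have ed: "E l pr" using last_prev_edge[OF p] by (simp add: l_def pr_def)
  have cwp: "cw p = ch l pr" by (simp add: cw_def l_def pr_def)
  have ch: "(\<Sum>w\<in>cw p. gsol \<zeta> y x (p @ [w])) = gsol \<zeta> y x p * (\<gamma> - complex_of_real (W l) - 1 / \<zeta> l pr)"
  proof -
    have "(\<Sum>w\<in>cw p. gsol \<zeta> y x (p @ [w])) = (\<Sum>w\<in>cw p. gsol \<zeta> y x p * \<zeta> w l)"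
      using g_snoc[OF p] by (simp add: l_def)
    also have "\<dots> = gsol \<zeta> y x p * (\<Sum>w\<in>ch l pr. \<zeta> w l)" by (simp add: sum_distrib_left cwp)
    finally show ?thesis using FP_props(2)[OF fp eta ed] by simp
  qed
  have nz: "\<zeta> l pr \<noteq> 0" using FP_props(1)[OF fp eta ed] .
  have main: "(\<Sum>q\<in>{q \<in> Sb y x. tree_adj E y p q}. gsol \<zeta> y x q)
           + (complex_of_real (W (last p)) - \<gamma>) * gsol \<zeta> y x p
        = - gsol \<zeta> y x p / \<zeta> l pr + (if 3 \<le> length p then gsol \<zeta> y x (butlast p) else 0)"
    unfolding nbr_sum[OF p] ch l_def[symmetric] using nz by (simp add: field_simps)
  show ?thesis
  proof (cases "length p = 2")
    case True
    then have pe: "p = [y, x]" using Sb_two p by blast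
    then have "l = x" "pr = y" by (auto simp: l_def pr_def)
    then show ?thesis using main pe g_two[OF e] nz by simp
  next
    case False
    then have l3: "3 \<le> length p" using Sb_len[OF p] by simp
    note bl = Sb_butlast[OF p l3]
    have "gsol \<zeta> y x p = gsol \<zeta> y x (butlast p) * \<zeta> l (last (butlast p))"
      using g_snoc[OF bl(1) bl(3)] bl(2) by (simp add: l_def)
    moreover have "last (butlast p) = pr"
    proof -
      have ne: "butlast p \<noteq> []" using l3 by (cases p) auto
      then show ?thesis using l3 unfolding pr_def by (simp add: last_conv_nth nth_butlast numeral_2_eq_2)
    qed
    moreover have "p \<noteq> [y, x]" using l3 by auto
    ultimately show ?thesis using main l3 nz by simp
  qed
qed

end



context gr begin

lemma cw_snoc: "p \<noteq> [] \<Longrightarrow> cw (p @ [w]) = ch w (last p)"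
  by (simp add: cw_def nth_append last_conv_nth)

lemma sh_empty: "k < 2 \<Longrightarrow> sh y x k = {}"
  using Sb_len by (force simp: sh_def)

lemma g_l2_bound:
  assumes fp: "FP W \<gamma> \<zeta>" and eta: "Im \<gamma> > 0" and e: "E y x"
  shows "\<exists>B. \<forall>n. (\<Sum>p\<in>Sn y x n. (cmod (gsol \<zeta> y x p))\<^sup>2) \<le> B"
proof -
  define g where "g = gsol \<zeta> y x"
  define \<eta> where "\<eta> = Im \<gamma>"
  have eta0: "\<eta> > 0" using eta by (simp add: \<eta>_def)
  define Ap where "Ap = (\<lambda>p. \<Sum>w\<in>cw p. - Im (\<zeta> w (last p)))"
  define T where "T = (\<lambda>k. \<Sum>p\<in>sh y x k. (cmod (g p))\<^sup>2 * (\<eta> + Ap p))"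
  define shs where "shs = (\<lambda>k. \<Sum>p\<in>sh y x k. (cmod (g p))\<^sup>2)"
  have cwE: "E w (last p)" if "w \<in> cw p" for w p
    using that Esym by (auto simp: cw_def ch_def)
  have Ap0: "Ap p \<ge> 0" for p
    unfolding Ap_def using FP_props(5)[OF fp eta] cwE by (intro sum_nonneg) (meson neg_0_le_iff_le)
  have T0: "T k \<ge> 0" for k
    unfolding T_def using Ap0 eta0 by (intro sum_nonneg mult_nonneg_nonneg) (auto intro: add_nonneg_nonneg less_imp_le)
  have Tstep: "T (Suc k) = T k - \<eta> * shs k" if k: "2 \<le> k" for k
  proof -
    have "T (Suc k) = (\<Sum>p\<in>sh y x k. \<Sum>w\<in>cw p. (cmod (g (p @ [w])))\<^sup>2 * (\<eta> + Ap (p @ [w])))"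
      unfolding T_def by (rule sum_sh_Suc[OF k])
    also have "\<dots> = (\<Sum>p\<in>sh y x k. \<Sum>w\<in>cw p. (cmod (g p))\<^sup>2 * (- Im (\<zeta> w (last p))))"
    proof (intro sum.cong refl)
      fix p w assume p: "p \<in> sh y x k" and w: "w \<in> cw p"
      have pS: "p \<in> Sb y x" using p by (simp add: sh_def)
      have ne: "p \<noteq> []" using Sb_len[OF pS] by auto
      have gs: "g (p @ [w]) = g p * \<zeta> w (last p)" using g_snoc[OF pS w] by (simp add: g_def)
      have A: "Ap (p @ [w]) = (\<Sum>c\<in>ch w (last p). - Im (\<zeta> c w))"
        unfolding Ap_def cw_snoc[OF ne] by simp
      have id: "- Im (\<zeta> w (last p)) = (cmod (\<zeta> w (last p)))\<^sup>2 * (\<eta> + (\<Sum>c\<in>ch w (last p). - Im (\<zeta> c w)))"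
        using FP_props(3)[OF fp eta cwE[OF w]] by (simp add: \<eta>_def)
      show "(cmod (g (p @ [w])))\<^sup>2 * (\<eta> + Ap (p @ [w])) = (cmod (g p))\<^sup>2 * (- Im (\<zeta> w (last p)))"
        unfolding gs A id by (simp add: norm_mult power_mult_distrib)
    qed
    also have "\<dots> = (\<Sum>p\<in>sh y x k. (cmod (g p))\<^sup>2 * Ap p)"
      by (simp add: Ap_def sum_distrib_left)
    also have "\<dots> = T k - \<eta> * shs k"
      by (simp add: T_def shs_def algebra_simps sum_subtractf sum_distrib_left sum.distrib)
    finally show ?thesis .
  qed
  have tel: "\<eta> * (\<Sum>k=2..m+2. shs k) + T (Suc (m+2)) = T 2" for m
  proof (induction m)
    case 0 then show ?case using Tstep[of 2] by (simp add: numeral_3_eq_3 numeral_2_eq_2)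
  next
    case (Suc m)
    have "(\<Sum>k=2..Suc m+2. shs k) = (\<Sum>k=2..m+2. shs k) + shs (Suc m + 2)"
      by (simp add: sum.cl_ivl_Suc)
    then show ?case using Suc Tstep[of "Suc m + 2"] by (simp add: algebra_simps)
  qed
  have bnd: "(\<Sum>k=2..n. shs k) \<le> T 2 / \<eta>" for n
  proof (cases "n < 2")
    case True then show ?thesis using T0 eta0 by simp
  next
    case False
    then obtain m where n: "n = m + 2" by (metis add.commute le_add_diff_inverse not_less)
    have "\<eta> * (\<Sum>k=2..n. shs k) \<le> T 2" using tel[of m] T0[of "Suc (m+2)"] unfolding n by linarith
    then show ?thesis using eta0 by (simp add: field_simps mult.commute)
  qed
  show ?thesis
    using bnd unfolding shs_def g_def sum_Sn by blast
qed

lemma g_summable: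
  assumes fp: "FP W \<gamma> \<zeta>" and eta: "Im \<gamma> > 0" and e: "E y x"
  shows "(\<lambda>p. (cmod (gsol \<zeta> y x p))\<^sup>2) summable_on Sb y x"
proof -
  obtain B where B: "\<And>n. (\<Sum>p\<in>Sn y x n. (cmod (gsol \<zeta> y x p))\<^sup>2) \<le> B"
    using g_l2_bound[OF assms] by blast
  show ?thesis
  proof (rule nonneg_bdd_above_summable_on)
    show "bdd_above (sum (\<lambda>p. (cmod (gsol \<zeta> y x p))\<^sup>2) ` {F. F \<subseteq> Sb y x \<and> finite F})"
    proof (rule bdd_aboveI2)
      fix F assume F: "F \<in> {F. F \<subseteq> Sb y x \<and> finite F}"
      then obtain n where n: "F \<subseteq> Sn y x n" using fin_sub_Sn by blast
      have "(\<Sum>p\<in>F. (cmod (gsol \<zeta> y x p))\<^sup>2) \<le> (\<Sum>p\<in>Sn y x n. (cmod (gsol \<zeta> y x p))\<^sup>2)"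
        by (rule sum_mono2[OF fin_Sn n]) auto
      then show "(\<Sum>p\<in>F. (cmod (gsol \<zeta> y x p))\<^sup>2) \<le> B" using B[of n] by linarith
    qed
  qed simp
qed

end



lemma ab_le_sq: "(a::real) \<ge> 0 \<Longrightarrow> b \<ge> 0 \<Longrightarrow> a * b \<le> a\<^sup>2 + b\<^sup>2"
proof -
  assume a: "a \<ge> 0" and b: "b \<ge> 0"
  have "0 \<le> (a - b)\<^sup>2" by simp
  hence "2 * a * b \<le> a\<^sup>2 + b\<^sup>2" by (simp add: power2_diff)
  moreover have "0 \<le> a * b" using a b by simp
  ultimately show ?thesis by linarith
qed

context gr begin

lemma uniq0:
  assumes eta: "Im \<gamma> > 0"
    and B: "\<And>n. (\<Sum>p\<in>Sn y x n. (cmod (h p))\<^sup>2) \<le> B"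
    and eq: "\<And>p. p \<in> Sb y x \<Longrightarrow> (\<Sum>q\<in>{q \<in> Sb y x. tree_adj E y p q}. h q)
                 + (complex_of_real (W (last p)) - \<gamma>) * h p = 0"
    and pS: "p0 \<in> Sb y x"
  shows "h p0 = 0"
proof -
  define \<eta> where "\<eta> = Im \<gamma>"
  have eta0: "\<eta> > 0" using eta by (simp add: \<eta>_def)
  define N where "N = real (card V)"
  define shs where "shs = (\<lambda>k. \<Sum>p\<in>sh y x k. (cmod (h p))\<^sup>2)"
  define Cp where "Cp = (\<lambda>p. \<Sum>w\<in>cw p. cnj (h p) * h (p @ [w]))"
  define Pp where "Pp = (\<lambda>p. if 3 \<le> length p then cnj (h p) * h (butlast p) else 0)"
  define C where "C = (\<lambda>k. \<Sum>p\<in>sh y x k. Cp p)"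
  define P where "P = (\<lambda>k. \<Sum>p\<in>sh y x k. Pp p)"
  have shs0: "shs k \<ge> 0" for k unfolding shs_def by (intro sum_nonneg) auto
  have a: "Im (Cp p) + Im (Pp p) = \<eta> * (cmod (h p))\<^sup>2" if p: "p \<in> Sb y x" for p
  proof -
    have e0: "(\<Sum>w\<in>cw p. h (p @ [w])) + (if 3 \<le> length p then h (butlast p) else 0)
              + (complex_of_real (W (last p)) - \<gamma>) * h p = 0"
      using eq[OF p] unfolding nbr_sum[OF p] .
    have "cnj (h p) * ((\<Sum>w\<in>cw p. h (p @ [w])) + (if 3 \<le> length p then h (butlast p) else 0)
              + (complex_of_real (W (last p)) - \<gamma>) * h p) = 0" using e0 by simp
    moreover have "Cp p = cnj (h p) * (\<Sum>w\<in>cw p. h (p @ [w]))" by (simp add: Cp_def sum_distrib_left)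
    moreover have "Pp p = cnj (h p) * (if 3 \<le> length p then h (butlast p) else 0)" by (simp add: Pp_def)
    moreover have "\<And>a b d e f::complex. a * (b + d + e * f) = a * b + a * d + e * (f * a)"
      by (simp add: algebra_simps)
    ultimately have "Cp p + Pp p + (complex_of_real (W (last p)) - \<gamma>) * (h p * cnj (h p)) = 0"
      by metis
    then have "Cp p + Pp p + (complex_of_real (W (last p)) - \<gamma>) * complex_of_real ((cmod (h p))\<^sup>2) = 0"
      by (simp only: complex_norm_square)
    then have "Im (Cp p + Pp p + (complex_of_real (W (last p)) - \<gamma>) * complex_of_real ((cmod (h p))\<^sup>2)) = 0"
      by simp
    then show ?thesis by (simp add: \<eta>_def)
  qed
  have b: "\<eta> * shs k = Im (C k) + Im (P k)" for k
  proof -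
    have "\<eta> * shs k = (\<Sum>p\<in>sh y x k. \<eta> * (cmod (h p))\<^sup>2)" by (simp add: shs_def sum_distrib_left)
    also have "\<dots> = (\<Sum>p\<in>sh y x k. Im (Cp p) + Im (Pp p))"
    proof (rule sum.cong[OF refl])
      fix p assume "p \<in> sh y x k"
      then have "p \<in> Sb y x" by (simp add: sh_def)
      then show "\<eta> * (cmod (h p))\<^sup>2 = Im (Cp p) + Im (Pp p)" using a by simp
    qed
    finally have "\<eta> * shs k = (\<Sum>p\<in>sh y x k. Im (Cp p) + Im (Pp p))" .
    then show ?thesis by (simp add: C_def P_def sum.distrib)
  qed
  have c: "P (Suc k) = cnj (C k)" if k: "2 \<le> k" for k
  proof -
    have "P (Suc k) = (\<Sum>p\<in>sh y x k. \<Sum>w\<in>cw p. Pp (p @ [w]))"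
      unfolding P_def by (rule sum_sh_Suc[OF k])
    also have "\<dots> = (\<Sum>p\<in>sh y x k. \<Sum>w\<in>cw p. cnj (h (p @ [w])) * h p)"
    proof (intro sum.cong refl)
      fix p w assume "p \<in> sh y x k"
      then have "length p = k" by (simp add: sh_def)
      then show "Pp (p @ [w]) = cnj (h (p @ [w])) * h p" using k by (simp add: Pp_def)
    qed
    also have "\<dots> = cnj (C k)" by (simp add: C_def Cp_def mult.commute)
    finally show ?thesis .
  qed
  have d: "P 2 = 0" unfolding P_def Pp_def by (intro sum.neutral) (auto simp: sh_def)
  have e: "\<eta> * (\<Sum>k=2..m+2. shs k) = Im (C (m+2))" for m
  proof (induction m)
    case 0 then show ?case using b[of 2] d by (simp add: numeral_2_eq_2)
  next
    case (Suc m)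
    have "(\<Sum>k=2..Suc m+2. shs k) = (\<Sum>k=2..m+2. shs k) + shs (Suc m + 2)"
      by (simp add: sum.cl_ivl_Suc)
    moreover have "Im (P (Suc m + 2)) = - Im (C (m + 2))" using c[of "m+2"] by simp
    moreover have "\<eta> * shs (Suc m + 2) = Im (C (Suc m + 2)) + Im (P (Suc m + 2))" by (rule b)
    ultimately show ?case using Suc.IH by (simp only: distrib_left; linarith)
  qed
  have f: "Im (C n) \<le> N * shs n + shs (Suc n)" if n: "2 \<le> n" for n
  proof -
    have "Im (C n) \<le> cmod (C n)" using abs_Im_le_cmod[of "C n"] by linarith
    also have "\<dots> \<le> (\<Sum>p\<in>sh y x n. \<Sum>w\<in>cw p. cmod (h p) * cmod (h (p @ [w])))"
      unfolding C_def Cp_def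
      by (rule order.trans[OF norm_sum sum_mono], rule order.trans[OF norm_sum])
         (simp add: norm_mult)
    also have "\<dots> \<le> (\<Sum>p\<in>sh y x n. \<Sum>w\<in>cw p. (cmod (h p))\<^sup>2 + (cmod (h (p @ [w])))\<^sup>2)"
      by (intro sum_mono ab_le_sq) auto
    also have "\<dots> = (\<Sum>p\<in>sh y x n. real (card (cw p)) * (cmod (h p))\<^sup>2) + shs (Suc n)"
      unfolding shs_def sum_sh_Suc[OF n] by (simp add: sum.distrib)
    also have "(\<Sum>p\<in>sh y x n. real (card (cw p)) * (cmod (h p))\<^sup>2) \<le> (\<Sum>p\<in>sh y x n. N * (cmod (h p))\<^sup>2)"
      by (intro sum_mono mult_right_mono) (auto simp: N_def cw_def card_ch)
    finally show ?thesis by (simp add: shs_def sum_distrib_left)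
  qed
  have g1: "(\<Sum>k<n. shs (k+2)) = (\<Sum>k=2..n+1. shs k)" for n
  proof (induction n)
    case 0 then show ?case by simp
  next
    case (Suc n)
    have a1: "(\<Sum>k<Suc n. shs (k+2)) = (\<Sum>k<n. shs (k+2)) + shs (n+2)" by (rule sum.lessThan_Suc)
    have a2: "(\<Sum>k=2..Suc n+1. shs k) = (\<Sum>k=2..n+1. shs k) + shs (n+2)"
      using sum.cl_ivl_Suc[of shs 2 "n+1"] by simp
    show ?case unfolding a1 a2 Suc.IH ..
  qed
  have g2: "(\<Sum>k=2..n. shs k) \<le> B" for n
    using B[of n] unfolding sum_Sn shs_def .
  have sm: "summable (\<lambda>k. shs (k+2))"
  proof (rule summableI_nonneg_bounded[of _ B])
    show "0 \<le> shs (n + 2)" for n by (rule shs0)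
    show "(\<Sum>i<n. shs (i + 2)) \<le> B" for n unfolding g1 by (rule g2)
  qed
  have lim0: "shs \<longlonglongrightarrow> 0" using summable_LIMSEQ_zero[OF sm] by (rule LIMSEQ_offset)
  have R: "(\<lambda>n. N * shs n + shs (Suc n)) \<longlonglongrightarrow> 0"
    using tendsto_add[OF tendsto_mult[OF tendsto_const lim0] LIMSEQ_Suc[OF lim0]] by simp
  define m where "m = length p0"
  have m2: "2 \<le> m" using Sb_len[OF pS] by (simp add: m_def)
  have le: "\<forall>n\<ge>m. \<eta> * (\<Sum>k=2..m. shs k) \<le> N * shs n + shs (Suc n)"
  proof (intro allI impI)
    fix n assume n: "m \<le> n"
    have "(\<Sum>k=2..m. shs k) \<le> (\<Sum>k=2..n. shs k)"
      using n shs0 by (intro sum_mono2) auto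
    then have "\<eta> * (\<Sum>k=2..m. shs k) \<le> \<eta> * (\<Sum>k=2..n. shs k)" using eta0 by simp
    also have "\<eta> * (\<Sum>k=2..n. shs k) = Im (C n)"
    proof -
      have "n = (n - 2) + 2" using n m2 by simp
      then show ?thesis using e[of "n - 2"] by metis
    qed
    also have "\<dots> \<le> N * shs n + shs (Suc n)" using f n m2 by simp
    finally show "\<eta> * (\<Sum>k=2..m. shs k) \<le> N * shs n + shs (Suc n)" .
  qed
  have "\<eta> * (\<Sum>k=2..m. shs k) \<le> 0"
    by (rule LIMSEQ_le_const[OF R]) (use le in blast)
  then have "(\<Sum>k=2..m. shs k) \<le> 0" using eta0 by (simp add: mult_le_0_iff)
  moreover have "shs m \<le> (\<Sum>k=2..m. shs k)"
    using m2 shs0 by (intro member_le_sum) auto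
  ultimately have "shs m \<le> 0" by linarith
  moreover have "(cmod (h p0))\<^sup>2 \<le> shs m"
    unfolding shs_def using pS fin_sh[unfolded sh_def] by (intro member_le_sum) (auto simp: sh_def m_def)
  ultimately have "(cmod (h p0))\<^sup>2 \<le> 0" by linarith
  then have "(cmod (h p0))\<^sup>2 = 0" by (meson antisym zero_le_power2)
  then show "h p0 = 0" by simp
qed

end



lemma sq_diff_le: "(cmod (a - b))\<^sup>2 \<le> 2 * (cmod a)\<^sup>2 + 2 * (cmod b)\<^sup>2"
proof -
  have "cmod (a - b) \<le> cmod a + cmod b" by (rule norm_triangle_ineq4)
  then have "(cmod (a - b))\<^sup>2 \<le> (cmod a + cmod b)\<^sup>2" by (simp add: power_mono)
  also have "\<dots> \<le> 2 * (cmod a)\<^sup>2 + 2 * (cmod b)\<^sup>2"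
  proof -
    have "0 \<le> (cmod a - cmod b)\<^sup>2" by simp
    then show ?thesis by (simp add: power2_sum power2_diff)
  qed
  finally show ?thesis .
qed

context gr begin

lemma tree_green_val:
  assumes fp: "FP W \<gamma> \<zeta>" and eta: "Im \<gamma> > 0" and e: "E y x"
  shows "tree_green E W y (Sb y x) \<gamma> [y, x] = - \<zeta> x y"
proof -
  define S where "S = Sb y x"
  define P where "P = (\<lambda>g::'a list \<Rightarrow> complex. (\<forall>q. q \<notin> S \<longrightarrow> g q = 0) \<and>
             (\<lambda>q. (cmod (g q))\<^sup>2) summable_on S \<and>
             (\<forall>q\<in>S. (\<Sum>y'\<in>{y'\<in>S. tree_adj E y q y'}. g y')
                      + (complex_of_real (W (last q)) - \<gamma>) * g q
                    = (if q = [y, x] then 1 else 0)))"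
  define g0 where "g0 = gsol \<zeta> y x"
  have Pg0: "P g0"
    unfolding P_def S_def g0_def
    using g_summable[OF fp eta e] g_eq[OF fp eta e] by (auto simp: gsol_def)
  obtain Bg where Bg: "\<And>n. (\<Sum>p\<in>Sn y x n. (cmod (g0 p))\<^sup>2) \<le> Bg"
    using g_l2_bound[OF fp eta e] unfolding g0_def by blast
  have uniq: "g = g0" if Pg: "P g" for g
  proof
    fix p
    show "g p = g0 p"
    proof (cases "p \<in> S")
      case False then show ?thesis using Pg Pg0 by (simp add: P_def)
    next
      case True
      define h where "h = (\<lambda>q. g q - g0 q)"
      have sg: "(\<lambda>q. (cmod (g q))\<^sup>2) summable_on S" using Pg by (simp add: P_def)
      have B: "(\<Sum>q\<in>Sn y x n. (cmod (h q))\<^sup>2) \<le> 2 * infsum (\<lambda>q. (cmod (g q))\<^sup>2) S + 2 * Bg" for n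
      proof -
        have "(\<Sum>q\<in>Sn y x n. (cmod (h q))\<^sup>2) \<le> (\<Sum>q\<in>Sn y x n. 2 * (cmod (g q))\<^sup>2 + 2 * (cmod (g0 q))\<^sup>2)"
          unfolding h_def by (intro sum_mono sq_diff_le)
        also have "\<dots> = 2 * (\<Sum>q\<in>Sn y x n. (cmod (g q))\<^sup>2) + 2 * (\<Sum>q\<in>Sn y x n. (cmod (g0 q))\<^sup>2)"
          by (simp add: sum.distrib sum_distrib_left)
        also have "(\<Sum>q\<in>Sn y x n. (cmod (g q))\<^sup>2) \<le> infsum (\<lambda>q. (cmod (g q))\<^sup>2) S"
          by (rule finite_sum_le_infsum[OF sg fin_Sn]) (auto simp: Sn_def S_def)
        finally show ?thesis using Bg[of n] by linarith
      qed
      have eqh: "(\<Sum>q\<in>{q \<in> Sb y x. tree_adj E y p' q}. h q)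
                 + (complex_of_real (W (last p')) - \<gamma>) * h p' = 0" if p': "p' \<in> Sb y x" for p'
      proof -
        have "(\<Sum>q\<in>{q \<in> Sb y x. tree_adj E y p' q}. h q)
                 + (complex_of_real (W (last p')) - \<gamma>) * h p'
            = ((\<Sum>q\<in>{q \<in> Sb y x. tree_adj E y p' q}. g q) + (complex_of_real (W (last p')) - \<gamma>) * g p')
              - ((\<Sum>q\<in>{q \<in> Sb y x. tree_adj E y p' q}. g0 q) + (complex_of_real (W (last p')) - \<gamma>) * g0 p')"
          unfolding h_def by (simp add: sum_subtractf algebra_simps)
        also have "\<dots> = 0" using Pg Pg0 p' by (simp add: P_def S_def)
        finally show ?thesis .
      qed
      have "h p = 0" using uniq0[OF eta B eqh] True by (simp add: S_def)
      then show ?thesis by (simp add: h_def)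
    qed
  qed
  have "(THE g. P g) = g0" by (rule the_equality[of P g0, OF Pg0 uniq])
  then have "tree_green E W y (Sb y x) \<gamma> [y, x] = g0 [y, x]"
    unfolding tree_green_def P_def S_def by simp
  then show ?thesis using g_two[OF e] by (simp add: g0_def)
qed

lemma zeta_FP:
  assumes fp: "FP W \<gamma> \<zeta>" and eta: "Im \<gamma> > 0" and e: "E x y"
  shows "zeta E W \<gamma> x y = \<zeta> x y"
  using tree_green_val[OF fp eta Esym[OF e]] branch_eq[OF Esym[OF e]]
  by (simp add: zeta_def)

lemma zeta_rec:
  assumes eta: "Im \<gamma> > 0" and e: "E x y"
  shows "zeta E W \<gamma> x y * (\<gamma> - complex_of_real (W x) - (\<Sum>c\<in>ch x y. zeta E W \<gamma> c x)) = 1"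
    and "Im (zeta E W \<gamma> x y) \<le> 0"
proof -
  obtain \<zeta> where fp: "FP W \<gamma> \<zeta>" using fixpoint_exists[OF eta] unfolding FP_def by blast
  have ce: "\<And>c. c \<in> ch x y \<Longrightarrow> E c x" using chE Esym by blast
  have "(\<Sum>c\<in>ch x y. zeta E W \<gamma> c x) = (\<Sum>c\<in>ch x y. \<zeta> c x)"
    using zeta_FP[OF fp eta ce] by simp
  also have "\<dots> = \<gamma> - complex_of_real (W x) - 1 / \<zeta> x y" by (rule FP_props(2)[OF fp eta e])
  finally show "zeta E W \<gamma> x y * (\<gamma> - complex_of_real (W x) - (\<Sum>c\<in>ch x y. zeta E W \<gamma> c x)) = 1"
    using zeta_FP[OF fp eta e] FP_props(1)[OF fp eta e] by simp
  show "Im (zeta E W \<gamma> x y) \<le> 0" using zeta_FP[OF fp eta e] FP_props(5)[OF fp eta e] by simp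
qed

end



context gr begin

lemma bv_props:
  assumes lam: "lam \<in> bulk_spectrum E W" and e: "E x y"
  shows "zeta_bv E W lam x y * (complex_of_real lam - complex_of_real (W x)
            - (\<Sum>c\<in>ch x y. zeta_bv E W lam c x)) = 1"
    and "Im (zeta_bv E W lam x y) < 0"
proof -
  define F where "F = at_right (0::real)"
  have Fnb: "F \<noteq> bot" by (simp add: F_def)
  define \<Gamma> where "\<Gamma> = (\<lambda>\<eta>::real. complex_of_real lam + \<i> * complex_of_real \<eta>)"
  have Gt: "(\<Gamma> \<longlongrightarrow> complex_of_real lam) F"
  proof -
    have "((\<lambda>\<eta>::real. complex_of_real lam + \<i> * complex_of_real \<eta>) \<longlongrightarrow> complex_of_real lam + \<i> * complex_of_real 0) F"
      unfolding F_def by (intro tendsto_intros)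
    then show ?thesis by (simp add: \<Gamma>_def)
  qed
  have Zt: "((\<lambda>\<eta>. zeta E W (\<Gamma> \<eta>) a b) \<longlongrightarrow> zeta_bv E W lam a b) F"
    and Zi: "Im (zeta_bv E W lam a b) \<noteq> 0" if ab: "E a b" for a b
  proof -
    obtain L where L: "((\<lambda>\<eta>::real. zeta E W (complex_of_real lam + \<i> * complex_of_real \<eta>) a b) \<longlongrightarrow> L) (at_right 0)"
      "Im L \<noteq> 0"
      using lam ab unfolding bulk_spectrum_def by blast
    have "zeta_bv E W lam a b = L" unfolding zeta_bv_def using L(1) by (rule tendsto_Lim[rotated]) simp
    then show "((\<lambda>\<eta>. zeta E W (\<Gamma> \<eta>) a b) \<longlongrightarrow> zeta_bv E W lam a b) F"
      "Im (zeta_bv E W lam a b) \<noteq> 0" using L by (auto simp: F_def \<Gamma>_def)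
  qed
  have ce: "\<And>c. c \<in> ch x y \<Longrightarrow> E c x" using chE Esym by blast
  define f where "f = (\<lambda>\<eta>. zeta E W (\<Gamma> \<eta>) x y * (\<Gamma> \<eta> - complex_of_real (W x) - (\<Sum>c\<in>ch x y. zeta E W (\<Gamma> \<eta>) c x)))"
  have ft: "(f \<longlongrightarrow> zeta_bv E W lam x y * (complex_of_real lam - complex_of_real (W x)
            - (\<Sum>c\<in>ch x y. zeta_bv E W lam c x))) F"
    unfolding f_def by (intro tendsto_mult tendsto_diff tendsto_sum Zt e ce Gt tendsto_const)
  have ev: "eventually (\<lambda>\<eta>. \<eta> > 0) F" unfolding F_def by (rule eventually_at_right_less)
  have "eventually (\<lambda>\<eta>. f \<eta> = 1) F"
    using ev by eventually_elim (use zeta_rec(1)[OF _ e] in \<open>simp add: f_def \<Gamma>_def\<close>)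
  then have "(f \<longlongrightarrow> 1) F" by (rule tendsto_eventually)
  then show "zeta_bv E W lam x y * (complex_of_real lam - complex_of_real (W x)
            - (\<Sum>c\<in>ch x y. zeta_bv E W lam c x)) = 1"
    using tendsto_unique[OF Fnb ft] by simp
  have "((\<lambda>\<eta>. Im (zeta E W (\<Gamma> \<eta>) x y)) \<longlongrightarrow> Im (zeta_bv E W lam x y)) F"
    by (intro tendsto_Im Zt e)
  moreover have "eventually (\<lambda>\<eta>. Im (zeta E W (\<Gamma> \<eta>) x y) \<le> 0) F"
    using ev by eventually_elim (use zeta_rec(2)[OF _ e] in \<open>simp add: \<Gamma>_def\<close>)
  ultimately have "Im (zeta_bv E W lam x y) \<le> 0"
    by (rule tendsto_upperbound) (simp add: F_def)
  then show "Im (zeta_bv E W lam x y) < 0" using Zi[OF e] by simp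
qed

lemma bv_rel:
  assumes lam: "lam \<in> bulk_spectrum E W" and e: "E x y"
  shows "- Im (zeta_bv E W lam x y) = (cmod (zeta_bv E W lam x y))\<^sup>2 * (\<Sum>c\<in>ch x y. - Im (zeta_bv E W lam c x))"
proof -
  define d where "d = complex_of_real lam - complex_of_real (W x) - (\<Sum>c\<in>ch x y. zeta_bv E W lam c x)"
  have m: "zeta_bv E W lam x y * d = 1" using bv_props(1)[OF lam e] by (simp add: d_def)
  then have dn: "d \<noteq> 0" by auto
  have z: "zeta_bv E W lam x y = 1 / d" using m dn by (simp add: field_simps)
  have "Im d = (\<Sum>c\<in>ch x y. - Im (zeta_bv E W lam c x))" by (simp add: d_def sum_negf)
  then show ?thesis using Im_inv_cmod[OF dn] z by simp
qed

end



lemma exit_edge: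
  assumes "R\<^sup>*\<^sup>* s t" "s \<in> C" "t \<notin> C"
  shows "\<exists>c w. c \<in> C \<and> w \<notin> C \<and> R c w"
  using assms by (induction rule: rtranclp_induct) auto

lemma final_ineq:
  fixes P t z :: real
  assumes P0: "P \<ge> 0" and z0: "z > 0" and t0: "t > 0" and Pt: "P * (t + z) \<le> t"
    and tz: "t * z \<le> 1" and zt: "z \<le> t"
  shows "P * (1 + z\<^sup>2) \<le> 1" and "z\<^sup>2 \<le> 1" and "1 \<le> (1 - z\<^sup>2/4)\<^sup>2 * (1 + z\<^sup>2)"
proof -
  have "P * (1 + z\<^sup>2) * (t + z) = P * (t + z) * (1 + z\<^sup>2)" by (simp add: algebra_simps)
  also have "\<dots> \<le> t * (1 + z\<^sup>2)" using Pt by (rule mult_right_mono) simp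
  also have "\<dots> = t + (t * z) * z" by (simp add: power2_eq_square algebra_simps)
  also have "\<dots> \<le> t + 1 * z" using tz z0 by (intro add_left_mono mult_right_mono) auto
  finally have "P * (1 + z\<^sup>2) * (t + z) \<le> 1 * (t + z)" by simp
  moreover have "t + z > 0" using t0 z0 by simp
  ultimately show "P * (1 + z\<^sup>2) \<le> 1" by (rule mult_right_le_imp_le)
  have "z * z \<le> t * z" using zt z0 by (simp add: mult_right_mono)
  then show s1: "z\<^sup>2 \<le> 1" using tz by (simp add: power2_eq_square)
  define s where "s = z\<^sup>2"
  have s0: "s \<ge> 0" and s1': "s \<le> 1" using s1 by (auto simp: s_def)
  have "0 \<le> s * (8 - 7 * s)" using s0 s1' by (intro mult_nonneg_nonneg) auto
  moreover have "0 \<le> s * s * s" using s0 by simp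
  moreover have "(4 - s)\<^sup>2 * (1 + s) = 16 + s * (8 - 7 * s) + s * s * s"
    by (simp add: power2_eq_square ring_distribs)
  ultimately have A: "16 \<le> (4 - s)\<^sup>2 * (1 + s)" by linarith
  have B: "(1 - s/4)\<^sup>2 * (1 + s) = (4 - s)\<^sup>2 * (1 + s) / 16"
    by (simp add: power2_eq_square field_simps)
  have "1 \<le> (1 - s/4)\<^sup>2 * (1 + s)" unfolding B using A by linarith
  then show "1 \<le> (1 - z\<^sup>2/4)\<^sup>2 * (1 + z\<^sup>2)" by (simp add: s_def)
qed

theorem proposition3p2:
  fixes V :: "'a set" and E :: "'a \<Rightarrow> 'a \<Rightarrow> bool" and W :: "'a \<Rightarrow> real"
    and u :: "nat \<Rightarrow> 'a" and m :: nat and lam :: real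
  assumes "fin_graph V E" and "graph_connected V E" and "min_degree_ge V E 2"
    and "is_cycle E u m" and "u ` {0..m} \<noteq> V"
    and "lam \<in> bulk_spectrum E W"
  shows "cmod ((\<Prod>i<m. zeta_bv E W lam (u (Suc i)) (u i)) * zeta_bv E W lam (u 0) (u m))
           \<le> 1 - (z_lambda E W lam)\<^sup>2 / 4"
proof -
  interpret gr V E by unfold_locales (rule assms(1))
  note lam = assms(6)
  define Z where "Z = (\<lambda>x y. zeta_bv E W lam x y)"
  define a where "a = (\<lambda>x y. - Im (Z x y))"
  define z where "z = z_lambda E W lam"
  define nxt where "nxt = (\<lambda>i. if i < m then Suc i else (0::nat))"
  define I where "I = {..m}"
  have m2: "m \<ge> 2" and inj: "inj_on u {0..m}"
    and cE: "\<And>i. i < m \<Longrightarrow> E (u i) (u (Suc i))" and cE2: "E (u m) (u 0)"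
    using assms(4) by (auto simp: is_cycle_def)
  have nxtI: "i \<le> m \<Longrightarrow> nxt i \<le> m" for i by (auto simp: nxt_def)
  have eI: "i \<le> m \<Longrightarrow> E (u i) (u (nxt i))" for i using cE cE2 by (auto simp: nxt_def)
  have eI': "i \<le> m \<Longrightarrow> E (u (nxt i)) (u i)" for i using eI Esym by blast
  have nn: "i \<le> m \<Longrightarrow> nxt (nxt i) \<noteq> i" for i using m2 by (auto simp: nxt_def)
  have uinj: "i \<le> m \<Longrightarrow> j \<le> m \<Longrightarrow> u i = u j \<Longrightarrow> i = j" for i j
    using inj by (auto simp: inj_on_def)
  have child: "u (nxt (nxt i)) \<in> ch (u (nxt i)) (u i)" if i: "i \<le> m" for i
  proof -
    have "E (u (nxt i)) (u (nxt (nxt i)))" using eI[OF nxtI[OF i]] .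
    moreover have "u (nxt (nxt i)) \<noteq> u i"
    proof
      assume "u (nxt (nxt i)) = u i"
      then have "nxt (nxt i) = i" using uinj[OF nxtI[OF nxtI[OF i]] i] by simp
      then show False using nn[OF i] by simp
    qed
    ultimately show ?thesis by (simp add: ch_def)
  qed
  have apos: "E x y \<Longrightarrow> a x y > 0" for x y using bv_props(2)[OF lam] by (simp add: a_def Z_def)
  have rel: "E x y \<Longrightarrow> a x y = (cmod (Z x y))\<^sup>2 * (\<Sum>c\<in>ch x y. a c x)" for x y
    unfolding a_def Z_def by (rule bv_rel[OF lam])
  have chpos: "c \<in> ch x y \<Longrightarrow> a c x > 0" for c x y using apos chE Esym by blast
  define D where "D = {(x, y). E x y}"
  have finD: "finite D" by (rule finite_subset[of _ "V \<times> V"]) (auto simp: D_def EV finV)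
  have Aset: "{\<bar>Im (zeta_bv E W lam x y)\<bar> | x y. E x y} = (\<lambda>(x,y). a x y) ` D"
  proof (intro set_eqI iffI)
    fix r assume "r \<in> {\<bar>Im (zeta_bv E W lam x y)\<bar> | x y. E x y}"
    then obtain x y where r: "r = \<bar>Im (zeta_bv E W lam x y)\<bar>" "E x y" by blast
    then have "r = a x y" using apos[OF r(2)] by (simp add: a_def Z_def)
    then show "r \<in> (\<lambda>(x,y). a x y) ` D" using r(2) by (force simp: D_def)
  next
    fix r assume "r \<in> (\<lambda>(x,y). a x y) ` D"
    then obtain x y where r: "r = a x y" "E x y" by (auto simp: D_def)
    then have "r = \<bar>Im (zeta_bv E W lam x y)\<bar>" using apos[OF r(2)] by (simp add: a_def Z_def)
    then show "r \<in> {\<bar>Im (zeta_bv E W lam x y)\<bar> | x y. E x y}" using r(2) by blast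
  qed
  have zdef: "z = Min ((\<lambda>(x,y). a x y) ` D)" unfolding z_def z_lambda_def Aset ..
  have Dne: "D \<noteq> {}" using cE2 by (auto simp: D_def)
  have zle: "E x y \<Longrightarrow> z \<le> a x y" for x y
    unfolding zdef using finD by (intro Min_le) (auto simp: D_def)
  have zpos: "z > 0"
  proof -
    have "z \<in> (\<lambda>(x,y). a x y) ` D" unfolding zdef using finD Dne by (intro Min_in) auto
    then show ?thesis using apos by (auto simp: D_def)
  qed
  define C where "C = u ` {0..m}"
  have uC: "i \<le> m \<Longrightarrow> u i \<in> C" for i by (simp add: C_def)
  have CV: "C \<subseteq> V"
  proof
    fix q assume "q \<in> C"
    then obtain i where i: "i \<le> m" "q = u i" by (auto simp: C_def)
    show "q \<in> V" using EV[OF eI[OF i(1)]] i(2) by simp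
  qed
  have exv: "\<exists>v. v \<in> V \<and> v \<notin> C"
  proof (rule ccontr)
    assume "\<not> (\<exists>v. v \<in> V \<and> v \<notin> C)"
    then have "V \<subseteq> C" by blast
    then have "C = V" using CV by (rule subset_antisym[rotated])
    then show False using assms(5) by (simp add: C_def)
  qed
  then obtain v where v: "v \<in> V" "v \<notin> C" by blast
  have u0C: "u 0 \<in> C" using uC[of 0] by simp
  have u0V: "u 0 \<in> V" using CV u0C by blast
  have conn: "E\<^sup>*\<^sup>* (u 0) v" using assms(2) u0V v(1) unfolding graph_connected_def by blast
  obtain c w where cw: "c \<in> C" "w \<notin> C" "E c w" using exit_edge[OF conn u0C v(2)] by blast
  obtain j where j: "j \<le> m" "c = u j" using cw(1) by (auto simp: C_def)
  define k where "k = (if j = 0 then m else j - 1)"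
  have k: "k \<le> m" "nxt k = j" using j m2 by (auto simp: k_def nxt_def)
  have wk: "w \<noteq> u k" using cw(2) uC[OF k(1)] by blast
  have wch: "w \<in> ch (u (nxt k)) (u k)" unfolding ch_def using cw(3) j(2) k(2) wk by simp
  have wne: "w \<noteq> u (nxt (nxt k))" using cw(2) uC[OF nxtI[OF nxtI[OF k(1)]]] by blast
  define \<alpha> where "\<alpha> = (\<lambda>i. a (u (nxt i)) (u i))"
  define b where "b = (\<lambda>i. (cmod (Z (u (nxt i)) (u i)))\<^sup>2)"
  define \<delta> where "\<delta> = (\<lambda>i. if i = k then z else 0)"
  have \<alpha>pos: "i \<le> m \<Longrightarrow> \<alpha> i > 0" for i using apos eI' by (simp add: \<alpha>_def)
  have b0: "b i \<ge> 0" for i by (simp add: b_def)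
  have sumge: "(\<Sum>c\<in>ch (u (nxt i)) (u i). a c (u (nxt i))) \<ge> \<alpha> (nxt i) + \<delta> i" if i: "i \<le> m" for i
  proof (cases "i = k")
    case False
    have "\<alpha> (nxt i) \<le> (\<Sum>c\<in>ch (u (nxt i)) (u i). a c (u (nxt i)))"
      unfolding \<alpha>_def using child[OF i] chpos fin_ch
      by (intro member_le_sum) (auto simp: less_imp_le)
    then show ?thesis using False by (simp add: \<delta>_def)
  next
    case True
    have sub: "{u (nxt (nxt k)), w} \<subseteq> ch (u (nxt k)) (u k)" using child[OF k(1)] wch by auto
    have "(\<Sum>c\<in>{u (nxt (nxt k)), w}. a c (u (nxt k))) \<le> (\<Sum>c\<in>ch (u (nxt k)) (u k). a c (u (nxt k)))"
      using sub chpos fin_ch by (intro sum_mono2) (auto simp: less_imp_le)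
    moreover have "(\<Sum>c\<in>{u (nxt (nxt k)), w}. a c (u (nxt k))) = \<alpha> (nxt k) + a w (u (nxt k))"
      using wne by (simp add: \<alpha>_def)
    moreover have "z \<le> a w (u (nxt k))" using zle wch chE Esym by blast
    ultimately show ?thesis using True by (simp add: \<delta>_def)
  qed
  have ineq_i: "b i * (\<alpha> (nxt i) + \<delta> i) \<le> \<alpha> i" if i: "i \<le> m" for i
  proof -
    have "b i * (\<alpha> (nxt i) + \<delta> i) \<le> b i * (\<Sum>c\<in>ch (u (nxt i)) (u i). a c (u (nxt i)))"
      using sumge[OF i] b0 by (simp add: mult_left_mono)
    also have "\<dots> = \<alpha> i" using rel[OF eI'[OF i]] by (simp add: \<alpha>_def b_def)
    finally show ?thesis .
  qed
  have \<delta>0: "\<delta> i \<ge> 0" for i using zpos by (simp add: \<delta>_def)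
  have prodle: "(\<Prod>i\<in>I. b i * (\<alpha> (nxt i) + \<delta> i)) \<le> (\<Prod>i\<in>I. \<alpha> i)"
    using ineq_i b0 \<alpha>pos nxtI \<delta>0 by (intro prod_mono) (auto simp: I_def less_imp_le intro!: mult_nonneg_nonneg add_nonneg_nonneg)
  have shift: "(\<Prod>i\<in>I. g (nxt i)) = (\<Prod>i\<in>I. g i)" for g :: "nat \<Rightarrow> real"
  proof -
    have "(\<Prod>i\<in>I. g (nxt i)) = (\<Prod>i<Suc m. g (nxt i))" by (simp add: I_def lessThan_Suc_atMost)
    also have "\<dots> = (\<Prod>i<m. g (nxt i)) * g (nxt m)" by (rule prod.lessThan_Suc)
    also have "(\<Prod>i<m. g (nxt i)) = (\<Prod>i<m. g (Suc i))" by (rule prod.cong) (auto simp: nxt_def)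
    also have "g (nxt m) = g 0" by (simp add: nxt_def)
    also have "(\<Prod>i<m. g (Suc i)) * g 0 = (\<Prod>i<Suc m. g i)" using prod.lessThan_Suc_shift[of g m] by (simp only: mult.commute)
    also have "\<dots> = (\<Prod>i\<in>I. g i)" by (simp add: I_def lessThan_Suc_atMost)
    finally show ?thesis .
  qed
  have prodZ: "(\<Prod>i<m. Z (u (Suc i)) (u i)) * Z (u 0) (u m) = (\<Prod>i\<in>I. Z (u (nxt i)) (u i))"
  proof -
    have "(\<Prod>i\<in>I. Z (u (nxt i)) (u i)) = (\<Prod>i<Suc m. Z (u (nxt i)) (u i))" by (simp add: I_def lessThan_Suc_atMost)
    also have "\<dots> = (\<Prod>i<m. Z (u (nxt i)) (u i)) * Z (u (nxt m)) (u m)" by (rule prod.lessThan_Suc)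
    also have "(\<Prod>i<m. Z (u (nxt i)) (u i)) = (\<Prod>i<m. Z (u (Suc i)) (u i))" by (rule prod.cong) (auto simp: nxt_def)
    also have "Z (u (nxt m)) (u m) = Z (u 0) (u m)" by (simp add: nxt_def)
    finally show ?thesis by simp
  qed
  define PB where "PB = (\<Prod>i\<in>I. b i)"
  define t where "t = \<alpha> (nxt k)"
  define R where "R = (\<Prod>i\<in>I - {k}. \<alpha> (nxt i))"
  have finI: "finite I" and kI: "k \<in> I" using k by (auto simp: I_def)
  have Rpos: "R > 0" unfolding R_def using \<alpha>pos nxtI by (intro prod_pos) (auto simp: I_def)
  have L1: "(\<Prod>i\<in>I. b i * (\<alpha> (nxt i) + \<delta> i)) = PB * ((t + z) * R)"
  proof -
    have "(\<Prod>i\<in>I. (\<alpha> (nxt i) + \<delta> i)) = (\<alpha> (nxt k) + \<delta> k) * (\<Prod>i\<in>I - {k}. (\<alpha> (nxt i) + \<delta> i))"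
      by (rule prod.remove[OF finI kI])
    also have "(\<Prod>i\<in>I - {k}. (\<alpha> (nxt i) + \<delta> i)) = R" unfolding R_def
      by (rule prod.cong) (auto simp: \<delta>_def)
    finally show ?thesis by (simp add: prod.distrib PB_def t_def \<delta>_def)
  qed
  have L2: "(\<Prod>i\<in>I. \<alpha> i) = t * R"
  proof -
    have "(\<Prod>i\<in>I. \<alpha> i) = (\<Prod>i\<in>I. \<alpha> (nxt i))" by (rule shift[symmetric])
    also have "\<dots> = \<alpha> (nxt k) * R" unfolding R_def by (rule prod.remove[OF finI kI])
    finally show ?thesis by (simp add: t_def)
  qed
  have PBt: "PB * (t + z) \<le> t"
  proof -
    have "(PB * (t + z)) * R \<le> t * R" using prodle L1 L2 by (simp add: mult.assoc)
    then show ?thesis using Rpos by simp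
  qed
  define nk where "nk = nxt k"
  have nkI: "nk \<le> m" unfolding nk_def by (rule nxtI[OF k(1)])
  have tpos: "t > 0" using \<alpha>pos[OF nkI] by (simp add: t_def nk_def)
  have zt: "z \<le> t" unfolding t_def \<alpha>_def using zle eI'[OF nkI] by (simp add: nk_def)
  have tz: "t * z \<le> 1"
  proof -
    have "z \<le> \<alpha> (nxt nk)" unfolding \<alpha>_def using zle eI'[OF nxtI[OF nkI]] by simp
    also have "\<dots> \<le> (\<Sum>c\<in>ch (u (nxt nk)) (u nk). a c (u (nxt nk)))" using sumge[OF nkI] \<delta>0[of nk] by linarith
    finally have zs: "z \<le> (\<Sum>c\<in>ch (u (nxt nk)) (u nk). a c (u (nxt nk)))" .
    have teq: "t = b nk * (\<Sum>c\<in>ch (u (nxt nk)) (u nk). a c (u (nxt nk)))"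
      using rel[OF eI'[OF nkI]] by (simp add: t_def \<alpha>_def b_def nk_def)
    have "b nk * z \<le> t" unfolding teq using zs b0 by (simp add: mult_left_mono)
    moreover have "t * t \<le> b nk"
    proof -
      have "t \<le> cmod (Z (u (nxt nk)) (u nk))"
        using abs_Im_le_cmod[of "Z (u (nxt nk)) (u nk)"] by (simp add: t_def \<alpha>_def a_def nk_def)
      then have "t * t \<le> cmod (Z (u (nxt nk)) (u nk)) * cmod (Z (u (nxt nk)) (u nk))"
        using tpos by (intro mult_mono) auto
      then show ?thesis by (simp add: b_def power2_eq_square)
    qed
    moreover have "t * t * z \<le> b nk * z" using calculation(2) zpos by (simp add: mult_right_mono)
    ultimately have "t * t * z \<le> t * 1" by linarith
    then show ?thesis using tpos by (simp add: mult.assoc)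
  qed
  have PB0: "PB \<ge> 0" unfolding PB_def using b0 by (intro prod_nonneg) auto
  note fi = final_ineq[OF PB0 zpos tpos PBt tz zt]
  have normsq: "(cmod (\<Prod>i\<in>I. Z (u (nxt i)) (u i)))\<^sup>2 = PB"
    unfolding PB_def b_def prod_norm[symmetric] prod_power_distrib ..
  have "(cmod (\<Prod>i\<in>I. Z (u (nxt i)) (u i)))\<^sup>2 \<le> (1 - z\<^sup>2/4)\<^sup>2"
  proof -
    have pos: "1 + z\<^sup>2 > 0" by (simp add: add_pos_nonneg)
    have "PB * (1 + z\<^sup>2) \<le> (1 - z\<^sup>2/4)\<^sup>2 * (1 + z\<^sup>2)" using fi(1) fi(3) by linarith
    then show ?thesis unfolding normsq using pos by simp
  qed
  moreover have "0 \<le> 1 - z\<^sup>2/4" using fi(2) by simp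
  ultimately have "cmod (\<Prod>i\<in>I. Z (u (nxt i)) (u i)) \<le> 1 - z\<^sup>2/4" by (rule power2_le_imp_le)
  then show ?thesis unfolding prodZ[unfolded Z_def, symmetric] z_def Z_def .
qed



end
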